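(* Let $I$ be an infinite set of positive integers and for each $n \in I$ let $H_n \le S_n$ be a subgroup. Suppose that the minimal degrees $m(H_n)$ are not bounded, i.e. for every constant $K$ there are infinitely many $n \in I$ with $m(H_n) > K$. Suppose moreover that for every $n \in I$ and every $k \le n$, $H_n$ has at most $n^{k/7}$ elements of support $k$. Then the family $(S_n, H_n)_{n \in I}$ is indistinguishable.
   Context: For a finite group $G$, let $\mathrm{Irr}(G)$ be its set of complex irreducible characters and $d_\chi=\chi(e)$. For $H \le G$ let $D_H = \frac{1}{|G|}\sum_{\chi \in \mathrm{Irr}(G)} d_\chi \big|\sum_{h \in H, h \neq e}\chi(h)\big|$ (the $L_1$ distance between the distributions $P_H(\chi)=\frac{d_\chi}{|G|}\sum_{h\in H}\chi(h)$ and $P_{\{e\}}$ on $\mathrm{Irr}(G)$ produced by weak quantum Fourier sampling). A family $(G_i,H_i)_{i \in I}$ with $H_i \le G_i$, $I$ an infinite set of positive integers and $|G_i| \to \infty$, is called distinguishable if there is a constant $c>0$ such that $D_{H_i} \ge (\log|G_i|)^{-c}$ for all sufficiently large $i \in I$, and indistinguishable otherwise. $S_n$ is the symmetric group on $\{1,\ldots,n\}$. For $g \in S_n$, the support $\mathrm{supp}(g)$ is the number of points moved by $g$. The minimal degree of $H \le S_n$ is $m(H) = \min\{\mathrm{supp}(h): h \in H, h \neq e\}$, with the convention $m(\{e\}) = +\infty$. *)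

theory Defs
  imports "HOL-Analysis.Analysis" "HOL-Combinatorics.Permutations" "HOL-Library.Extended_Nat"
begin

definition Sym :: "nat \<Rightarrow> (nat \<Rightarrow> nat) set" where
  "Sym n = {p. p permutes {1..n}}"

definition is_subgroup_Sym :: "nat \<Rightarrow> (nat \<Rightarrow> nat) set \<Rightarrow> bool" where
  "is_subgroup_Sym n H \<longleftrightarrow> H \<subseteq> Sym n \<and> id \<in> H \<and>
     (\<forall>g\<in>H. \<forall>h\<in>H. g \<circ> h \<in> H) \<and> (\<forall>h\<in>H. inv h \<in> H)"

text \<open>Square complex matrices of size d, represented as functions; only entries i,j < d matter.\<close>
definition mat_mult :: "nat \<Rightarrow> (nat \<Rightarrow> nat \<Rightarrow> complex) \<Rightarrow> (nat \<Rightarrow> nat \<Rightarrow> complex) \<Rightarrow> (nat \<Rightarrow> nat \<Rightarrow> complex)" where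
  "mat_mult d A B = (\<lambda>i j. \<Sum>k<d. A i k * B k j)"

definition mat_vec :: "nat \<Rightarrow> (nat \<Rightarrow> nat \<Rightarrow> complex) \<Rightarrow> (nat \<Rightarrow> complex) \<Rightarrow> (nat \<Rightarrow> complex)" where
  "mat_vec d A v = (\<lambda>i. if i < d then (\<Sum>k<d. A i k * v k) else 0)"

definition mat_eq :: "nat \<Rightarrow> (nat \<Rightarrow> nat \<Rightarrow> complex) \<Rightarrow> (nat \<Rightarrow> nat \<Rightarrow> complex) \<Rightarrow> bool" where
  "mat_eq d A B \<longleftrightarrow> (\<forall>i<d. \<forall>j<d. A i j = B i j)"

definition cvecs :: "nat \<Rightarrow> (nat \<Rightarrow> complex) set" where
  "cvecs d = {v. \<forall>i\<ge>d. v i = 0}"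

definition is_subspace :: "nat \<Rightarrow> (nat \<Rightarrow> complex) set \<Rightarrow> bool" where
  "is_subspace d W \<longleftrightarrow> W \<subseteq> cvecs d \<and> (\<lambda>_. 0) \<in> W \<and>
     (\<forall>v\<in>W. \<forall>w\<in>W. (\<lambda>i. v i + w i) \<in> W) \<and> (\<forall>c. \<forall>v\<in>W. (\<lambda>i. c * v i) \<in> W)"

definition is_rep :: "nat \<Rightarrow> nat \<Rightarrow> ((nat \<Rightarrow> nat) \<Rightarrow> (nat \<Rightarrow> nat \<Rightarrow> complex)) \<Rightarrow> bool" where
  "is_rep n d \<rho> \<longleftrightarrow> d \<ge> 1 \<and> mat_eq d (\<rho> id) (\<lambda>i j. if i = j then 1 else 0) \<and>
     (\<forall>g\<in>Sym n. \<forall>h\<in>Sym n. mat_eq d (\<rho> (g \<circ> h)) (mat_mult d (\<rho> g) (\<rho> h)))"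

definition is_irrep :: "nat \<Rightarrow> nat \<Rightarrow> ((nat \<Rightarrow> nat) \<Rightarrow> (nat \<Rightarrow> nat \<Rightarrow> complex)) \<Rightarrow> bool" where
  "is_irrep n d \<rho> \<longleftrightarrow> is_rep n d \<rho> \<and>
     (\<forall>W. is_subspace d W \<and> (\<forall>g\<in>Sym n. \<forall>w\<in>W. mat_vec d (\<rho> g) w \<in> W)
          \<longrightarrow> W = {\<lambda>_. 0} \<or> W = cvecs d)"

definition character :: "nat \<Rightarrow> nat \<Rightarrow> ((nat \<Rightarrow> nat) \<Rightarrow> (nat \<Rightarrow> nat \<Rightarrow> complex)) \<Rightarrow> (nat \<Rightarrow> nat) \<Rightarrow> complex" where
  "character n d \<rho> g = (if g \<in> Sym n then (\<Sum>i<d. \<rho> g i i) else 0)"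

definition Irr :: "nat \<Rightarrow> ((nat \<Rightarrow> nat) \<Rightarrow> complex) set" where
  "Irr n = {character n d \<rho> | d \<rho>. is_irrep n d \<rho>}"

text \<open>D_H for H <= S_n; d_chi = chi(e) (a positive integer, so its real part).\<close>
definition D_H :: "nat \<Rightarrow> (nat \<Rightarrow> nat) set \<Rightarrow> real" where
  "D_H n H = (1 / real (card (Sym n))) *
     (\<Sum>chr\<in>Irr n. Re (chr id) * cmod (\<Sum>h\<in>H - {id}. chr h))"

definition supp :: "(nat \<Rightarrow> nat) \<Rightarrow> nat" where
  "supp g = card {x. g x \<noteq> x}"

text \<open>Minimal degree; Inf of the empty set is infinity, so m({e}) = infinity.\<close>
definition min_degree :: "(nat \<Rightarrow> nat) set \<Rightarrow> enat" where
  "min_degree H = (INF h\<in>H - {id}. enat (supp h))"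

definition distinguishable :: "nat set \<Rightarrow> (nat \<Rightarrow> (nat \<Rightarrow> nat) set) \<Rightarrow> bool" where
  "distinguishable I H \<longleftrightarrow> (\<exists>c>0. \<exists>N. \<forall>n\<in>I. n \<ge> N \<longrightarrow>
      D_H n (H n) \<ge> (ln (real (card (Sym n)))) powr (-c))"

definition indistinguishable :: "nat set \<Rightarrow> (nat \<Rightarrow> (nat \<Rightarrow> nat) set) \<Rightarrow> bool" where
  "indistinguishable I H \<longleftrightarrow> \<not> distinguishable I H"

end

theory Submission
  imports Defs "Jordan_Normal_Form.Spectral_Radius" "HOL-Combinatorics.Permutations"
begin


abbreviation ginv :: "(nat\<Rightarrow>nat) \<Rightarrow> (nat\<Rightarrow>nat)" where "ginv g \<equiv> inv_into UNIV g"

lemma mult_entry: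
  assumes "A \<in> carrier_mat r k" "B \<in> carrier_mat k c" "i < r" "j < c"
  shows "(A * B) $$ (i,j) = (\<Sum>l<k. A $$ (i,l) * B $$ (l,j))"
  using assms by (simp add: scalar_prod_def lessThan_atLeast0)

lemma mv_entry:
  assumes "A \<in> carrier_mat r k" "v \<in> carrier_vec k" "i < r"
  shows "(A *\<^sub>v v) $ i = (\<Sum>l<k. A $$ (i,l) * v $ l)"
  using assms by (simp add: scalar_prod_def lessThan_atLeast0)

definition RM :: "((nat\<Rightarrow>nat)\<Rightarrow>nat\<Rightarrow>nat\<Rightarrow>complex) \<Rightarrow> nat \<Rightarrow> (nat\<Rightarrow>nat) \<Rightarrow> complex mat" where
  "RM \<rho> d g = mat d d (\<lambda>(i,j). \<rho> g i j)"

definition tr :: "complex mat \<Rightarrow> complex" where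
  "tr A = (\<Sum>i<dim_row A. A $$ (i,i))"

lemma RM_carrier[simp]: "RM \<rho> d g \<in> carrier_mat d d"
  by (simp add: RM_def)

lemma RM_dim[simp]: "dim_row (RM \<rho> d g) = d" "dim_col (RM \<rho> d g) = d"
  by (simp_all add: RM_def)

lemma tr_comm:
  assumes "A \<in> carrier_mat r c" "B \<in> carrier_mat c r"
  shows "tr (A * B) = tr (B * A)"
proof -
  have "tr (A * B) = (\<Sum>i<r. \<Sum>l<c. A $$ (i,l) * B $$ (l,i))"
    unfolding tr_def using assms by (auto simp del: index_mult_mat(1) simp: mult_entry[OF assms] intro!: sum.cong)
  also have "\<dots> = (\<Sum>l<c. \<Sum>i<r. B $$ (l,i) * A $$ (i,l))"
    by (subst sum.swap) (simp add: mult.commute)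
  also have "\<dots> = tr (B * A)"
    unfolding tr_def using assms by (auto simp del: index_mult_mat(1) simp: mult_entry[OF assms(2,1)] intro!: sum.cong)
  finally show ?thesis .
qed

lemma tr_one[simp]: "tr (1\<^sub>m d) = of_nat d"
  by (simp add: tr_def)

lemma tr_smult_one: "tr (c \<cdot>\<^sub>m 1\<^sub>m d) = c * of_nat d"
  by (simp add: tr_def)

lemma Sym_finite[simp]: "finite (Sym n)"
  unfolding Sym_def by (simp add: finite_permutations)

lemma Sym_id[simp]: "id \<in> Sym n"
  unfolding Sym_def by (simp add: permutes_id)

lemma Sym_comp[simp]: "g \<in> Sym n \<Longrightarrow> h \<in> Sym n \<Longrightarrow> g \<circ> h \<in> Sym n"
  unfolding Sym_def by (simp add: permutes_compose)

lemma Sym_inv[simp]: "g \<in> Sym n \<Longrightarrow> ginv g \<in> Sym n"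
  unfolding Sym_def by (simp add: permutes_inv)

lemma Sym_inv_comp1[simp]: "g \<in> Sym n \<Longrightarrow> ginv g \<circ> g = id"
  unfolding Sym_def by (simp add: permutes_inv_o(2))

lemma Sym_inv_comp2[simp]: "g \<in> Sym n \<Longrightarrow> g \<circ> ginv g = id"
  unfolding Sym_def by (simp add: permutes_inv_o(1))

lemma Sym_bij: "g \<in> Sym n \<Longrightarrow> bij g"
  unfolding Sym_def by (simp add: permutes_bij)

lemma Sym_inv_inv[simp]: "g \<in> Sym n \<Longrightarrow> ginv (ginv g) = g"
  using Sym_bij by (simp add: inv_inv_eq)

lemma Sym_card: "card (Sym n) = fact n"
  unfolding Sym_def using card_permutations[of "{1..n}" n] by simp

lemma Sym_inv_comp_distrib: "g \<in> Sym n \<Longrightarrow> h \<in> Sym n \<Longrightarrow> ginv (g \<circ> h) = ginv h \<circ> ginv g"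
  using Sym_bij by (simp add: o_inv_distrib)

lemma rep_id: "is_rep n d \<rho> \<Longrightarrow> RM \<rho> d id = 1\<^sub>m d"
  unfolding is_rep_def mat_eq_def RM_def by (intro eq_matI) auto

lemma rep_mult: assumes "is_rep n d \<rho>" "g \<in> Sym n" "h \<in> Sym n"
  shows "RM \<rho> d (g \<circ> h) = RM \<rho> d g * RM \<rho> d h"
proof (intro eq_matI)
  fix i j assume ij: "i < dim_row (RM \<rho> d g * RM \<rho> d h)" "j < dim_col (RM \<rho> d g * RM \<rho> d h)"
  hence "i < d" "j < d" by auto
  have "RM \<rho> d (g \<circ> h) $$ (i,j) = \<rho> (g \<circ> h) i j" using \<open>i<d\<close> \<open>j<d\<close> by (simp add: RM_def)
  also have "\<dots> = mat_mult d (\<rho> g) (\<rho> h) i j"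
    using assms \<open>i<d\<close> \<open>j<d\<close> unfolding is_rep_def mat_eq_def by auto
  also have "\<dots> = (RM \<rho> d g * RM \<rho> d h) $$ (i,j)"
    using \<open>i<d\<close> \<open>j<d\<close> by (subst mult_entry[of _ d d _ d]) (auto simp: mat_mult_def RM_def)
  finally show "RM \<rho> d (g \<circ> h) $$ (i,j) = (RM \<rho> d g * RM \<rho> d h) $$ (i,j)" .
qed auto

lemma rep_inv1: "is_rep n d \<rho> \<Longrightarrow> g \<in> Sym n \<Longrightarrow> RM \<rho> d (ginv g) * RM \<rho> d g = 1\<^sub>m d"
  by (metis rep_mult rep_id Sym_inv Sym_inv_comp1)

lemma rep_inv2: "is_rep n d \<rho> \<Longrightarrow> g \<in> Sym n \<Longrightarrow> RM \<rho> d g * RM \<rho> d (ginv g) = 1\<^sub>m d"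
  by (metis rep_mult rep_id Sym_inv Sym_inv_comp2)

lemma character_tr: "g \<in> Sym n \<Longrightarrow> character n d \<rho> g = tr (RM \<rho> d g)"
  by (simp add: character_def tr_def RM_def)

lemma irr_JNF:
  assumes irr: "is_irrep n d \<rho>" and U: "U \<subseteq> carrier_vec d" "0\<^sub>v d \<in> U"
    "\<And>u w. u\<in>U \<Longrightarrow> w\<in>U \<Longrightarrow> u + w \<in> U" "\<And>c u. u\<in>U \<Longrightarrow> c \<cdot>\<^sub>v u \<in> U"
    "\<And>g u. g \<in> Sym n \<Longrightarrow> u \<in> U \<Longrightarrow> RM \<rho> d g *\<^sub>v u \<in> U"
  shows "U = {0\<^sub>v d} \<or> U = carrier_vec d"
proof -
  define v2f where "v2f = (\<lambda>(u::complex vec) i. if i < d then u $ i else 0)"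
  define W where "W = v2f ` U"
  have inj: "u = w" if "u \<in> carrier_vec d" "w \<in> carrier_vec d" "v2f u = v2f w" for u w
  proof (intro eq_vecI)
    fix i assume i: "i < dim_vec w"
    have "v2f u i = v2f w i" using that(3) by simp
    thus "u $ i = w $ i" using i that by (auto simp: v2f_def)
  qed (use that in auto)
  have sub: "is_subspace d W"
    unfolding is_subspace_def
  proof (intro conjI ballI allI)
    show "W \<subseteq> cvecs d" by (auto simp: W_def v2f_def cvecs_def)
    show "(\<lambda>_. 0) \<in> W" unfolding W_def
      by (rule image_eqI[of _ _ "0\<^sub>v d"]) (auto simp: v2f_def U)
  next
    fix v w assume "v \<in> W" "w \<in> W"
    then obtain u1 u2 where "u1 \<in> U" "u2 \<in> U" "v = v2f u1" "w = v2f u2" by (auto simp: W_def)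
    moreover have "u1 \<in> carrier_vec d" "u2 \<in> carrier_vec d" using calculation U by auto
    ultimately show "(\<lambda>i. v i + w i) \<in> W" unfolding W_def
      using U by (intro image_eqI[of _ _ "u1 + u2"]) (auto simp: v2f_def)
  next
    fix c v assume "v \<in> W"
    then obtain u1 where "u1 \<in> U" "v = v2f u1" by (auto simp: W_def)
    moreover have "u1 \<in> carrier_vec d" using calculation U by auto
    ultimately show "(\<lambda>i. c * v i) \<in> W" unfolding W_def
      using U by (intro image_eqI[of _ _ "c \<cdot>\<^sub>v u1"]) (auto simp: v2f_def)
  qed
  have inv: "\<forall>g\<in>Sym n. \<forall>w\<in>W. mat_vec d (\<rho> g) w \<in> W"
  proof (intro ballI)
    fix g w assume g: "g \<in> Sym n" and "w \<in> W"
    then obtain u where u: "u \<in> U" "w = v2f u" by (auto simp: W_def)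
    have uc: "u \<in> carrier_vec d" using u U by auto
    have "mat_vec d (\<rho> g) w = v2f (RM \<rho> d g *\<^sub>v u)"
    proof (rule ext)
      fix i show "mat_vec d (\<rho> g) w i = v2f (RM \<rho> d g *\<^sub>v u) i"
      proof (cases "i < d")
        case True
        have "v2f (RM \<rho> d g *\<^sub>v u) i = (\<Sum>l<d. RM \<rho> d g $$ (i,l) * u $ l)"
          using True uc by (simp add: v2f_def mv_entry[OF RM_carrier uc True])
        also have "\<dots> = mat_vec d (\<rho> g) w i"
          using True by (auto simp: mat_vec_def u v2f_def RM_def intro!: sum.cong)
        finally show ?thesis by simp
      qed (simp add: mat_vec_def v2f_def)
    qed
    thus "mat_vec d (\<rho> g) w \<in> W" unfolding W_def using U(5)[OF g u(1)] by auto
  qed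
  from irr sub inv have "W = {\<lambda>_. 0} \<or> W = cvecs d" unfolding is_irrep_def by blast
  thus ?thesis
  proof
    assume W0: "W = {\<lambda>_. 0}"
    have "u = 0\<^sub>v d" if "u \<in> U" for u
    proof -
      have "v2f u \<in> W" using that unfolding W_def by (rule imageI)
      hence "v2f u = (\<lambda>_. 0)" using W0 by blast
      also have "\<dots> = v2f (0\<^sub>v d)" unfolding v2f_def by (rule ext) simp
      finally have "v2f u = v2f (0\<^sub>v d)" .
      moreover have "u \<in> carrier_vec d" using that U by auto
      ultimately show ?thesis using inj[of u "0\<^sub>v d"] zero_carrier_vec by blast
    qed
    hence "U = {0\<^sub>v d}" using U(2) by blast
    thus ?thesis ..
  next
    assume W1: "W = cvecs d"
    have "u \<in> U" if "u \<in> carrier_vec d" for u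
    proof -
      have "v2f u \<in> W" unfolding W1 by (auto simp: v2f_def cvecs_def)
      then obtain u' where "u' \<in> U" "v2f u = v2f u'" unfolding W_def by auto
      moreover have "u' \<in> carrier_vec d" using \<open>u' \<in> U\<close> U by auto
      ultimately show ?thesis using inj[of u u'] that by blast
    qed
    hence "U = carrier_vec d" using U(1) by blast
    thus ?thesis ..
  qed
qed



lemma mv_zero: "(T::complex mat) \<in> carrier_mat e d \<Longrightarrow> T *\<^sub>v 0\<^sub>v d = (0\<^sub>v e :: complex vec)"
  by (intro eq_vecI) auto

lemma RM_mv_carrier[simp]: "u \<in> carrier_vec d \<Longrightarrow> RM \<rho> d g *\<^sub>v u \<in> carrier_vec d"
  by (rule mult_mat_vec_carrier[OF RM_carrier])

lemma sum_delta_mult: "finite A \<Longrightarrow> (\<Sum>k\<in>A. f k * (if k = j then 1 else 0)) = (if j \<in> A then f j else (0::complex))"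
proof -
  assume "finite A"
  have "(\<Sum>k\<in>A. f k * (if k = j then 1 else 0)) = (\<Sum>k\<in>A. if k = j then f k else 0)"
    by (rule sum.cong) auto
  also have "\<dots> = (if j \<in> A then f j else 0)" using \<open>finite A\<close> by (rule sum.delta)
  finally show ?thesis .
qed

lemma mv_unit: assumes T: "(T::complex mat) \<in> carrier_mat e d" and j: "j < d"
  shows "T *\<^sub>v unit_vec d j = col T j"
proof (intro eq_vecI)
  fix i assume "i < dim_vec (col T j)"
  hence i: "i < e" using T by auto
  have "(T *\<^sub>v unit_vec d j) $ i = row T i \<bullet> unit_vec d j" using i T by auto
  also have "\<dots> = (\<Sum>k\<in>{0..<d}. row T i $ k * (if k = j then 1 else 0))"
    unfolding scalar_prod_def by (intro sum.cong) (auto simp: unit_vec_def)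
  also have "\<dots> = row T i $ j" using j by (subst sum_delta_mult) auto
  also have "\<dots> = col T j $ i" using i j T by auto
  finally show "(T *\<^sub>v unit_vec d j) $ i = col T j $ i" .
qed (use T in auto)

lemma smult_zero_vec': "c \<cdot>\<^sub>v 0\<^sub>v e = (0\<^sub>v e :: complex vec)"
  by (intro eq_vecI) auto

lemma smult_add_vec': "u \<in> carrier_vec d \<Longrightarrow> w \<in> carrier_vec d \<Longrightarrow> c \<cdot>\<^sub>v u + c \<cdot>\<^sub>v w = c \<cdot>\<^sub>v (u + w :: complex vec)"
  by (intro eq_vecI) (auto simp: algebra_simps)

lemma mat_zero_if_cols:
  assumes T: "(T::complex mat) \<in> carrier_mat e d" and c: "\<And>j. j<d \<Longrightarrow> T *\<^sub>v unit_vec d j = 0\<^sub>v e"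
  shows "T = 0\<^sub>m e d"
proof (intro eq_matI)
  fix i j assume "i < dim_row (0\<^sub>m e d :: complex mat)" "j < dim_col (0\<^sub>m e d :: complex mat)"
  hence ij: "i < e" "j < d" by auto
  have "T $$ (i,j) = col T j $ i" using T ij by auto
  also have "\<dots> = (T *\<^sub>v unit_vec d j) $ i" using mv_unit[OF T ij(2)] by simp
  also have "\<dots> = 0" using c[OF ij(2)] ij by simp
  finally show "T $$ (i,j) = 0\<^sub>m e d $$ (i,j)" using ij by simp
qed (use T in auto)

lemma schur1:
  assumes irr1: "is_irrep n d \<rho>" and irr2: "is_irrep n e \<sigma>" and T: "T \<in> carrier_mat e d"
    and int: "\<And>g. g \<in> Sym n \<Longrightarrow> RM \<sigma> e g * T = T * RM \<rho> d g"
    and nz: "T \<noteq> 0\<^sub>m e d" and g: "g \<in> Sym n"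
  shows "tr (RM \<sigma> e g) = tr (RM \<rho> d g)"
proof -
  have ker: "v = 0\<^sub>v d" if v: "v \<in> carrier_vec d" "T *\<^sub>v v = 0\<^sub>v e" for v
  proof -
    let ?U = "{v \<in> carrier_vec d. T *\<^sub>v v = 0\<^sub>v e}"
    have "?U = {0\<^sub>v d} \<or> ?U = carrier_vec d"
    proof (rule irr_JNF[OF irr1])
      show "?U \<subseteq> carrier_vec d" by auto
      show "0\<^sub>v d \<in> ?U" using T by (simp add: mv_zero)
      show "u + w \<in> ?U" if "u \<in> ?U" "w \<in> ?U" for u w
        using that T by (simp add: mult_add_distrib_mat_vec[OF T])
      show "c \<cdot>\<^sub>v u \<in> ?U" if "u \<in> ?U" for c u
        using that T by (simp add: mult_mat_vec[OF T] smult_zero_vec')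
      show "RM \<rho> d g *\<^sub>v u \<in> ?U" if "g \<in> Sym n" "u \<in> ?U" for g u
      proof -
        have "T *\<^sub>v (RM \<rho> d g *\<^sub>v u) = (T * RM \<rho> d g) *\<^sub>v u"
          by (rule assoc_mult_mat_vec[OF T RM_carrier, symmetric]) (use that in auto)
        also have "\<dots> = (RM \<sigma> e g * T) *\<^sub>v u" using int that by simp
        also have "\<dots> = RM \<sigma> e g *\<^sub>v (T *\<^sub>v u)"
          by (rule assoc_mult_mat_vec[OF RM_carrier T]) (use that in auto)
        also have "\<dots> = 0\<^sub>v e" using that mv_zero[OF RM_carrier] by simp
        finally show ?thesis using that by auto
      qed
    qed
    moreover have "?U \<noteq> carrier_vec d"
    proof
      assume U: "?U = carrier_vec d"
      have "\<And>j. j<d \<Longrightarrow> T *\<^sub>v unit_vec d j = 0\<^sub>v e"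
      proof -
        fix j assume "j < d"
        hence "unit_vec d j \<in> carrier_vec d" by simp
        hence "unit_vec d j \<in> ?U" using U by blast
        thus "T *\<^sub>v unit_vec d j = 0\<^sub>v e" by blast
      qed
      hence "T = 0\<^sub>m e d" by (rule mat_zero_if_cols[OF T])
      thus False using nz by simp
    qed
    ultimately have "?U = {0\<^sub>v d}" by blast
    thus ?thesis using v by blast
  qed
  have inj: "x = y" if "x \<in> carrier_vec d" "y \<in> carrier_vec d" "T *\<^sub>v x = T *\<^sub>v y" for x y
  proof -
    have "T *\<^sub>v (x - y) = T *\<^sub>v x - T *\<^sub>v y"
      by (rule mult_minus_distrib_mat_vec[OF T that(1,2)])
    also have "\<dots> = 0\<^sub>v e" using that T by (intro eq_vecI) auto
    finally have xy: "x - y = 0\<^sub>v d" using ker that by simp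
    show ?thesis
    proof (intro eq_vecI)
      fix i assume i: "i < dim_vec y"
      have "(x - y) $ i = 0" using xy i that by simp
      thus "x $ i = y $ i" using i that by simp
    qed (use that in simp)
  qed
  have surj: "\<exists>v\<in>carrier_vec d. w = T *\<^sub>v v" if w: "w \<in> carrier_vec e" for w
  proof -
    let ?V = "{w \<in> carrier_vec e. \<exists>v\<in>carrier_vec d. w = T *\<^sub>v v}"
    have "?V = {0\<^sub>v e} \<or> ?V = carrier_vec e"
    proof (rule irr_JNF[OF irr2])
      show "?V \<subseteq> carrier_vec e" by auto
      show "0\<^sub>v e \<in> ?V" using T by (auto intro!: bexI[of _ "0\<^sub>v d"] simp: mv_zero)
      show "u + w \<in> ?V" if "u \<in> ?V" "w \<in> ?V" for u w
      proof -
        from that obtain a b where ab: "a \<in> carrier_vec d" "b \<in> carrier_vec d" "u = T *\<^sub>v a" "w = T *\<^sub>v b" by auto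
        thus ?thesis using that T by (auto intro!: bexI[of _ "a + b"] simp: mult_add_distrib_mat_vec[OF T])
      qed
      show "c \<cdot>\<^sub>v u \<in> ?V" if "u \<in> ?V" for c u
      proof -
        from that obtain a where ab: "a \<in> carrier_vec d" "u = T *\<^sub>v a" by auto
        thus ?thesis using that T by (auto intro!: bexI[of _ "c \<cdot>\<^sub>v a"] simp: mult_mat_vec[OF T])
      qed
      show "RM \<sigma> e g *\<^sub>v u \<in> ?V" if "g \<in> Sym n" "u \<in> ?V" for g u
      proof -
        from that obtain a where a: "a \<in> carrier_vec d" "u = T *\<^sub>v a" by auto
        have "RM \<sigma> e g *\<^sub>v u = (RM \<sigma> e g * T) *\<^sub>v a"
          using a by (simp add: assoc_mult_mat_vec[OF RM_carrier T])
        also have "\<dots> = (T * RM \<rho> d g) *\<^sub>v a" using int that by simp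
        also have "\<dots> = T *\<^sub>v (RM \<rho> d g *\<^sub>v a)"
          using a by (simp add: assoc_mult_mat_vec[OF T RM_carrier])
        moreover have "T *\<^sub>v (RM \<rho> d g *\<^sub>v a) \<in> carrier_vec e"
          using a T by (simp add: mult_mat_vec_carrier)
        ultimately show ?thesis using a by (auto intro!: bexI[of _ "RM \<rho> d g *\<^sub>v a"])
      qed
    qed
    moreover have "?V \<noteq> {0\<^sub>v e}"
    proof
      assume V0: "?V = {0\<^sub>v e}"
      have "\<And>j. j<d \<Longrightarrow> T *\<^sub>v unit_vec d j = 0\<^sub>v e"
      proof -
        fix j assume "j < d"
        hence "T *\<^sub>v unit_vec d j \<in> ?V" using T by (auto intro!: bexI[of _ "unit_vec d j"])
        thus "T *\<^sub>v unit_vec d j = 0\<^sub>v e" using V0 by blast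
      qed
      hence "T = 0\<^sub>m e d" by (rule mat_zero_if_cols[OF T])
      thus False using nz by simp
    qed
    ultimately have "?V = carrier_vec e" by blast
    thus ?thesis using w by blast
  qed
  define u where "u = (\<lambda>j. SOME v. v \<in> carrier_vec d \<and> unit_vec e j = T *\<^sub>v v)"
  have u: "u j \<in> carrier_vec d \<and> unit_vec e j = T *\<^sub>v u j" if "j < e" for j
  proof -
    have "\<exists>v. v \<in> carrier_vec d \<and> unit_vec e j = T *\<^sub>v v" using surj[of "unit_vec e j"] by auto
    thus ?thesis unfolding u_def by (rule someI_ex)
  qed
  define S where "S = mat d e (\<lambda>(i,j). u j $ i)"
  have S: "S \<in> carrier_mat d e" by (simp add: S_def)
  have colS: "col S j = u j" if "j < e" for j
    using u[OF that] that by (auto simp: S_def)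
  have TS: "T * S = 1\<^sub>m e"
  proof (intro eq_matI)
    fix i j assume "i < dim_row (1\<^sub>m e :: complex mat)" "j < dim_col (1\<^sub>m e :: complex mat)"
    hence ij: "i < e" "j < e" by auto
    have "(T * S) $$ (i,j) = col (T * S) j $ i" using ij T S by simp
    also have "\<dots> = (T *\<^sub>v u j) $ i" using ij T S colS by (simp add: col_mult2[OF T S])
    also have "\<dots> = unit_vec e j $ i" using u[OF ij(2)] by simp
    finally show "(T * S) $$ (i,j) = 1\<^sub>m e $$ (i,j)" using ij by simp
  qed (use T S in auto)
  have ST: "S * T = 1\<^sub>m d"
  proof (intro eq_matI)
    fix i j assume "i < dim_row (1\<^sub>m d :: complex mat)" "j < dim_col (1\<^sub>m d :: complex mat)"
    hence ij: "i < d" "j < d" by auto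
    have "T *\<^sub>v col (S * T) j = col (T * (S * T)) j"
      by (rule col_mult2[symmetric, OF T _ ij(2)]) (use S T in simp)
    also have "T * (S * T) = (T * S) * T" by (rule assoc_mult_mat[symmetric, OF T S T])
    also have "\<dots> = T" using TS T by simp
    also have "col T j = T *\<^sub>v unit_vec d j" using mv_unit[OF T ij(2)] by simp
    finally have eqc: "T *\<^sub>v col (S * T) j = T *\<^sub>v unit_vec d j" .
    have "col (S * T) j \<in> carrier_vec d" using S T ij by simp
    hence "col (S * T) j = unit_vec d j"
      using inj[OF _ _ eqc] by simp
    moreover have "(S * T) $$ (i,j) = col (S * T) j $ i" using ij S T by simp
    ultimately have "(S * T) $$ (i,j) = unit_vec d j $ i" by simp
    thus "(S * T) $$ (i,j) = 1\<^sub>m d $$ (i,j)" using ij by simp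
  qed (use T S in auto)
  let ?A = "RM \<sigma> e g" and ?B = "RM \<rho> d g"
  have "tr ?A = tr (?A * (T * S))" using TS by simp
  also have "?A * (T * S) = (?A * T) * S" by (rule assoc_mult_mat[symmetric, OF RM_carrier T S])
  also have "\<dots> = (T * ?B) * S" using int[OF g] by simp
  also have "\<dots> = T * (?B * S)" by (rule assoc_mult_mat[OF T RM_carrier S])
  also have "tr \<dots> = tr ((?B * S) * T)" by (rule tr_comm[OF T mult_carrier_mat[OF RM_carrier S]])
  also have "(?B * S) * T = ?B * (S * T)" by (rule assoc_mult_mat[OF RM_carrier S T])
  also have "\<dots> = ?B" using ST by simp
  finally show ?thesis .
qed

lemma schur2:
  assumes irr: "is_irrep n d \<rho>" and T: "T \<in> carrier_mat d d"
    and int: "\<And>g. g \<in> Sym n \<Longrightarrow> RM \<rho> d g * T = T * RM \<rho> d g"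
  shows "\<exists>c. T = c \<cdot>\<^sub>m 1\<^sub>m d"
proof -
  have d: "d > 0" using irr unfolding is_irrep_def is_rep_def by auto
  obtain c where "c \<in> spectrum T" using spectrum_non_empty[OF T d] by auto
  then obtain v where ev: "eigenvector T v c" unfolding spectrum_def eigenvalue_def by auto
  have v: "v \<in> carrier_vec d" "v \<noteq> 0\<^sub>v d" "T *\<^sub>v v = c \<cdot>\<^sub>v v"
    using ev T unfolding eigenvector_def by auto
  let ?U = "{u \<in> carrier_vec d. T *\<^sub>v u = c \<cdot>\<^sub>v u}"
  have "?U = {0\<^sub>v d} \<or> ?U = carrier_vec d"
  proof (rule irr_JNF[OF irr])
    show "?U \<subseteq> carrier_vec d" by auto
    show "0\<^sub>v d \<in> ?U" using T by (auto simp: mv_zero)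
    show "u + w \<in> ?U" if "u \<in> ?U" "w \<in> ?U" for u w
      using that T by (auto simp: mult_add_distrib_mat_vec[OF T] smult_add_vec')
    show "a \<cdot>\<^sub>v u \<in> ?U" if "u \<in> ?U" for a u
      using that T by (simp add: mult_mat_vec[OF T] smult_smult_assoc mult.commute)
    show "RM \<rho> d g *\<^sub>v u \<in> ?U" if "g \<in> Sym n" "u \<in> ?U" for g u
    proof -
      have "T *\<^sub>v (RM \<rho> d g *\<^sub>v u) = (T * RM \<rho> d g) *\<^sub>v u"
        by (rule assoc_mult_mat_vec[OF T RM_carrier, symmetric]) (use that in auto)
      also have "\<dots> = (RM \<rho> d g * T) *\<^sub>v u" using int that by simp
      also have "\<dots> = RM \<rho> d g *\<^sub>v (T *\<^sub>v u)"
        by (rule assoc_mult_mat_vec[OF RM_carrier T]) (use that in auto)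
      also have "\<dots> = c \<cdot>\<^sub>v (RM \<rho> d g *\<^sub>v u)" using that by (auto simp: mult_mat_vec[OF RM_carrier])
      finally show ?thesis using that by auto
    qed
  qed
  moreover have "v \<in> ?U" using v by auto
  ultimately have U: "?U = carrier_vec d" using v by blast
  have "T = c \<cdot>\<^sub>m 1\<^sub>m d"
  proof (intro eq_matI)
    fix i j assume "i < dim_row (c \<cdot>\<^sub>m 1\<^sub>m d)" "j < dim_col (c \<cdot>\<^sub>m 1\<^sub>m d)"
    hence ij: "i < d" "j < d" by auto
    have "unit_vec d j \<in> ?U" using U ij by auto
    hence "T *\<^sub>v unit_vec d j = c \<cdot>\<^sub>v unit_vec d j" by simp
    hence "col T j $ i = (c \<cdot>\<^sub>v unit_vec d j) $ i" using mv_unit[OF T ij(2)] by simp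
    thus "T $$ (i,j) = (c \<cdot>\<^sub>m 1\<^sub>m d) $$ (i,j)" using ij T by auto
  qed (use T in auto)
  thus ?thesis by blast
qed



lemma sum_mat_left:
  assumes A: "(A::complex mat) \<in> carrier_mat r k" and F: "\<And>g. g \<in> G \<Longrightarrow> F g \<in> carrier_mat k c"
  shows "A * mat k c (\<lambda>(i,j). \<Sum>g\<in>G. F g $$ (i,j)) = mat r c (\<lambda>(i,j). \<Sum>g\<in>G. (A * F g) $$ (i,j))"
proof (intro eq_matI)
  fix i j assume ij: "i < dim_row (mat r c (\<lambda>(i,j). \<Sum>g\<in>G. (A * F g) $$ (i,j)))"
    "j < dim_col (mat r c (\<lambda>(i,j). \<Sum>g\<in>G. (A * F g) $$ (i,j)))"
  hence ij: "i < r" "j < c" by auto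
  have "(A * mat k c (\<lambda>(i,j). \<Sum>g\<in>G. F g $$ (i,j))) $$ (i,j)
      = (\<Sum>l<k. A $$ (i,l) * (\<Sum>g\<in>G. F g $$ (l,j)))"
    by (subst mult_entry[OF A _ ij], simp, rule sum.cong[OF refl], simp add: ij)
  also have "\<dots> = (\<Sum>g\<in>G. \<Sum>l<k. A $$ (i,l) * F g $$ (l,j))"
    by (simp add: sum_distrib_left sum.swap[of _ G])
  also have "\<dots> = (\<Sum>g\<in>G. (A * F g) $$ (i,j))"
    by (intro sum.cong refl) (simp add: mult_entry[OF A F ij])
  finally show "(A * mat k c (\<lambda>(i,j). \<Sum>g\<in>G. F g $$ (i,j))) $$ (i,j) = mat r c (\<lambda>(i,j). \<Sum>g\<in>G. (A * F g) $$ (i,j)) $$ (i,j)"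
    using ij by simp
qed (use A in auto)

lemma sum_mat_right:
  assumes B: "(B::complex mat) \<in> carrier_mat k c" and F: "\<And>g. g \<in> G \<Longrightarrow> F g \<in> carrier_mat r k"
  shows "mat r k (\<lambda>(i,j). \<Sum>g\<in>G. F g $$ (i,j)) * B = mat r c (\<lambda>(i,j). \<Sum>g\<in>G. (F g * B) $$ (i,j))"
proof (intro eq_matI)
  fix i j assume ij: "i < dim_row (mat r c (\<lambda>(i,j). \<Sum>g\<in>G. (F g * B) $$ (i,j)))"
    "j < dim_col (mat r c (\<lambda>(i,j). \<Sum>g\<in>G. (F g * B) $$ (i,j)))"
  hence ij: "i < r" "j < c" by auto
  have "(mat r k (\<lambda>(i,j). \<Sum>g\<in>G. F g $$ (i,j)) * B) $$ (i,j)
      = (\<Sum>l<k. (\<Sum>g\<in>G. F g $$ (i,l)) * B $$ (l,j))"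
    by (subst mult_entry[OF _ B ij], simp, rule sum.cong[OF refl], simp add: ij)
  also have "\<dots> = (\<Sum>g\<in>G. \<Sum>l<k. F g $$ (i,l) * B $$ (l,j))"
    by (simp add: sum_distrib_right sum.swap[of _ G])
  also have "\<dots> = (\<Sum>g\<in>G. (F g * B) $$ (i,j))"
    by (intro sum.cong refl) (simp add: mult_entry[OF F B ij])
  finally show "(mat r k (\<lambda>(i,j). \<Sum>g\<in>G. F g $$ (i,j)) * B) $$ (i,j) = mat r c (\<lambda>(i,j). \<Sum>g\<in>G. (F g * B) $$ (i,j)) $$ (i,j)"
    using ij by simp
qed (use B in auto)

lemma bij_left_mult: "h \<in> Sym n \<Longrightarrow> bij_betw (\<lambda>g. h \<circ> g) (Sym n) (Sym n)"
proof -
  assume h: "h \<in> Sym n"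
  have 1: "ginv h \<circ> (h \<circ> a) = a" for a using Sym_inv_comp1[OF h] by (metis comp_assoc id_comp)
  have 2: "h \<circ> (ginv h \<circ> a) = a" for a using Sym_inv_comp2[OF h] by (metis comp_assoc id_comp)
  show ?thesis by (rule bij_betw_byWitness[of _ "\<lambda>g. ginv h \<circ> g"]) (use h 1 2 in auto)
qed

definition TX :: "nat \<Rightarrow> ((nat\<Rightarrow>nat)\<Rightarrow>nat\<Rightarrow>nat\<Rightarrow>complex) \<Rightarrow> nat \<Rightarrow> ((nat\<Rightarrow>nat)\<Rightarrow>nat\<Rightarrow>nat\<Rightarrow>complex) \<Rightarrow> nat \<Rightarrow> complex mat \<Rightarrow> complex mat" where
  "TX n \<sigma> e \<rho> d X = mat e d (\<lambda>(i,j). \<Sum>g\<in>Sym n. (RM \<sigma> e g * X * RM \<rho> d (ginv g)) $$ (i,j))"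

lemma TX_carrier: "TX n \<sigma> e \<rho> d X \<in> carrier_mat e d"
  by (simp add: TX_def)

lemma TX_int:
  assumes r1: "is_rep n d \<rho>" and r2: "is_rep n e \<sigma>" and X: "X \<in> carrier_mat e d" and h: "h \<in> Sym n"
  shows "RM \<sigma> e h * TX n \<sigma> e \<rho> d X = TX n \<sigma> e \<rho> d X * RM \<rho> d h"
proof -
  have F: "\<And>g. g \<in> Sym n \<Longrightarrow> RM \<sigma> e g * X * RM \<rho> d (ginv g) \<in> carrier_mat e d"
    by (rule mult_carrier_mat[OF mult_carrier_mat[OF RM_carrier X] RM_carrier])
  have "RM \<sigma> e h * TX n \<sigma> e \<rho> d X = mat e d (\<lambda>(i,j). \<Sum>g\<in>Sym n. (RM \<sigma> e h * (RM \<sigma> e g * X * RM \<rho> d (ginv g))) $$ (i,j))"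
    unfolding TX_def by (rule sum_mat_left[OF RM_carrier F])
  also have "\<dots> = mat e d (\<lambda>(i,j). \<Sum>g\<in>Sym n. (RM \<sigma> e (h \<circ> g) * X * RM \<rho> d (ginv g)) $$ (i,j))"
  proof -
    have "RM \<sigma> e h * (RM \<sigma> e g * X * RM \<rho> d (ginv g)) = RM \<sigma> e (h \<circ> g) * X * RM \<rho> d (ginv g)"
      if g: "g \<in> Sym n" for g
    proof -
      have "RM \<sigma> e h * (RM \<sigma> e g * X * RM \<rho> d (ginv g)) = (RM \<sigma> e h * (RM \<sigma> e g * X)) * RM \<rho> d (ginv g)"
        by (rule assoc_mult_mat[symmetric, OF RM_carrier mult_carrier_mat[OF RM_carrier X] RM_carrier])
      also have "RM \<sigma> e h * (RM \<sigma> e g * X) = (RM \<sigma> e h * RM \<sigma> e g) * X"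
        by (rule assoc_mult_mat[symmetric, OF RM_carrier RM_carrier X])
      also have "RM \<sigma> e h * RM \<sigma> e g = RM \<sigma> e (h \<circ> g)" using rep_mult[OF r2 h g] by simp
      finally show ?thesis .
    qed
    thus ?thesis by (intro cong_mat refl sum.cong) auto
  qed
  also have "\<dots> = mat e d (\<lambda>(i,j). \<Sum>g\<in>Sym n. (RM \<sigma> e g * X * RM \<rho> d (ginv g \<circ> h)) $$ (i,j))"
  proof -
    have "(\<Sum>g\<in>Sym n. (RM \<sigma> e g * X * RM \<rho> d (ginv g \<circ> h)) $$ (i,j))
        = (\<Sum>g\<in>Sym n. (RM \<sigma> e (h \<circ> g) * X * RM \<rho> d (ginv (h \<circ> g) \<circ> h)) $$ (i,j))" for i j
      by (rule sum.reindex_bij_betw[symmetric, OF bij_left_mult[OF h]])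
    moreover have "ginv (h \<circ> g) \<circ> h = ginv g" if "g \<in> Sym n" for g
      using that h by (simp add: Sym_inv_comp_distrib o_assoc[symmetric] del: o_assoc)
    ultimately show ?thesis by (intro cong_mat refl) auto
  qed
  also have "\<dots> = mat e d (\<lambda>(i,j). \<Sum>g\<in>Sym n. (RM \<sigma> e g * X * RM \<rho> d (ginv g) * RM \<rho> d h) $$ (i,j))"
  proof -
    have "RM \<sigma> e g * X * RM \<rho> d (ginv g \<circ> h) = RM \<sigma> e g * X * RM \<rho> d (ginv g) * RM \<rho> d h"
      if g: "g \<in> Sym n" for g
    proof -
      have "RM \<rho> d (ginv g \<circ> h) = RM \<rho> d (ginv g) * RM \<rho> d h" using rep_mult[OF r1 Sym_inv[OF g] h] .
      moreover have "RM \<sigma> e g * X * (RM \<rho> d (ginv g) * RM \<rho> d h) = RM \<sigma> e g * X * RM \<rho> d (ginv g) * RM \<rho> d h"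
        by (rule assoc_mult_mat[symmetric, OF mult_carrier_mat[OF RM_carrier X] RM_carrier RM_carrier])
      ultimately show ?thesis by simp
    qed
    thus ?thesis by (intro cong_mat refl sum.cong) auto
  qed
  also have "\<dots> = TX n \<sigma> e \<rho> d X * RM \<rho> d h"
    unfolding TX_def by (rule sum_mat_right[OF RM_carrier F, symmetric])
  finally show ?thesis .
qed

definition Emat :: "nat \<Rightarrow> nat \<Rightarrow> nat \<Rightarrow> nat \<Rightarrow> complex mat" where
  "Emat e d j l = mat e d (\<lambda>(a,b). if a = j \<and> b = l then 1 else 0)"

lemma Emat_carrier[simp]: "Emat e d j l \<in> carrier_mat e d"
  by (simp add: Emat_def)

lemma Emat_entry:
  assumes A: "(A::complex mat) \<in> carrier_mat r e" and B: "B \<in> carrier_mat d c"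
    and i: "i < r" and k: "k < c" and j: "j < e" and l: "l < d"
  shows "(A * Emat e d j l * B) $$ (i,k) = A $$ (i,j) * B $$ (l,k)"
proof -
  have AE: "(A * Emat e d j l) $$ (i,b) = (if b = l then A $$ (i,j) else 0)" if b: "b < d" for b
  proof -
    have "(A * Emat e d j l) $$ (i,b) = (\<Sum>a<e. A $$ (i,a) * (if a = j \<and> b = l then 1 else 0))"
      by (subst mult_entry[OF A Emat_carrier i b]) (auto simp: Emat_def b intro!: sum.cong)
    also have "\<dots> = (\<Sum>a<e. if b = l then A $$ (i,a) * (if a = j then 1 else 0) else 0)"
      by (intro sum.cong) auto
    also have "\<dots> = (if b = l then A $$ (i,j) else 0)"
      using j by (cases "b = l") (simp_all add: sum_delta_mult)
    finally show ?thesis .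
  qed
  have "(A * Emat e d j l * B) $$ (i,k) = (\<Sum>b<d. (A * Emat e d j l) $$ (i,b) * B $$ (b,k))"
    by (rule mult_entry[OF mult_carrier_mat[OF A Emat_carrier] B i k])
  also have "\<dots> = (\<Sum>b<d. (B $$ (b,k) * A $$ (i,j)) * (if b = l then 1 else 0))"
    by (intro sum.cong) (auto simp: AE)
  also have "\<dots> = B $$ (l,k) * A $$ (i,j)" using l by (simp add: sum_delta_mult)
  finally show ?thesis by simp
qed

lemma TX_E_entry:
  assumes i: "i < e" and k: "k < d" and j: "j < e" and l: "l < d"
  shows "TX n \<sigma> e \<rho> d (Emat e d j l) $$ (i,k) = (\<Sum>g\<in>Sym n. \<sigma> g i j * \<rho> (ginv g) l k)"
proof -
  have "TX n \<sigma> e \<rho> d (Emat e d j l) $$ (i,k) = (\<Sum>g\<in>Sym n. (RM \<sigma> e g * Emat e d j l * RM \<rho> d (ginv g)) $$ (i,k))"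
    unfolding TX_def using i k by simp
  also have "\<dots> = (\<Sum>g\<in>Sym n. \<sigma> g i j * \<rho> (ginv g) l k)"
    by (intro sum.cong refl) (simp only: Emat_entry[OF RM_carrier RM_carrier i k j l], simp add: RM_def i j k l)
  finally show ?thesis .
qed

lemma tr_expand: "tr (RM \<rho> d g) = (\<Sum>i<d. \<rho> g i i)"
  by (simp add: tr_def RM_def)

lemma orth_diff:
  assumes irr1: "is_irrep n d \<rho>" and irr2: "is_irrep n e \<sigma>"
    and g0: "g0 \<in> Sym n" "tr (RM \<sigma> e g0) \<noteq> tr (RM \<rho> d g0)"
  shows "(\<Sum>g\<in>Sym n. tr (RM \<sigma> e g) * tr (RM \<rho> d (ginv g))) = 0"
proof -
  have r1: "is_rep n d \<rho>" and r2: "is_rep n e \<sigma>" using irr1 irr2 by (auto simp: is_irrep_def)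
  have z: "TX n \<sigma> e \<rho> d X = 0\<^sub>m e d" if X: "X \<in> carrier_mat e d" for X
  proof (rule ccontr)
    assume "TX n \<sigma> e \<rho> d X \<noteq> 0\<^sub>m e d"
    from schur1[OF irr1 irr2 TX_carrier TX_int[OF r1 r2 X] this g0(1)] g0(2) show False by simp
  qed
  have c: "(\<Sum>g\<in>Sym n. \<sigma> g i i * \<rho> (ginv g) k k) = 0" if "i < e" "k < d" for i k
  proof -
    have "(\<Sum>g\<in>Sym n. \<sigma> g i i * \<rho> (ginv g) k k) = TX n \<sigma> e \<rho> d (Emat e d i k) $$ (i,k)"
      using that by (simp add: TX_E_entry)
    also have "\<dots> = 0" using z[OF Emat_carrier] that by simp
    finally show ?thesis .
  qed
  have "(\<Sum>g\<in>Sym n. tr (RM \<sigma> e g) * tr (RM \<rho> d (ginv g)))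
      = (\<Sum>g\<in>Sym n. \<Sum>i<e. \<Sum>k<d. \<sigma> g i i * \<rho> (ginv g) k k)"
    by (intro sum.cong refl) (simp add: tr_expand sum_product)
  also have "\<dots> = (\<Sum>i<e. \<Sum>k<d. \<Sum>g\<in>Sym n. \<sigma> g i i * \<rho> (ginv g) k k)"
    by (subst sum.swap) (subst (2) sum.swap, simp)
  also have "\<dots> = 0" by (simp add: c)
  finally show ?thesis .
qed

lemma orth_same:
  assumes irr: "is_irrep n d \<rho>"
  shows "(\<Sum>g\<in>Sym n. tr (RM \<rho> d g) * tr (RM \<rho> d (ginv g))) = of_nat (card (Sym n))"
proof -
  have r: "is_rep n d \<rho>" using irr by (auto simp: is_irrep_def)
  have d: "d > 0" using r by (auto simp: is_rep_def)
  let ?N = "of_nat (card (Sym n)) :: complex"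
  have c: "(\<Sum>g\<in>Sym n. \<rho> g i j * \<rho> (ginv g) l k) = (if i = k \<and> j = l then ?N / of_nat d else 0)"
    if ik: "i < d" "k < d" "j < d" "l < d" for i j k l
  proof -
    let ?X = "Emat d d j l"
    obtain c where cT: "TX n \<rho> d \<rho> d ?X = c \<cdot>\<^sub>m 1\<^sub>m d"
      using schur2[OF irr TX_carrier TX_int[OF r r Emat_carrier]] by blast
    have trX: "tr ?X = (if j = l then 1 else 0)"
    proof -
      have "tr ?X = (\<Sum>a<d. if a = j \<and> a = l then 1 else 0)" by (simp add: tr_def Emat_def)
      also have "\<dots> = (\<Sum>a<d. if j = l then (1::complex) * (if a = j then 1 else 0) else 0)"
        by (intro sum.cong) auto
      also have "\<dots> = (if j = l then 1 else 0)" using ik by (cases "j = l") (simp_all add: sum_delta_mult)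
      finally show ?thesis .
    qed
    have "tr (TX n \<rho> d \<rho> d ?X) = (\<Sum>a<d. \<Sum>g\<in>Sym n. (RM \<rho> d g * ?X * RM \<rho> d (ginv g)) $$ (a,a))"
      by (simp add: tr_def TX_def)
    also have "\<dots> = (\<Sum>g\<in>Sym n. tr (RM \<rho> d g * ?X * RM \<rho> d (ginv g)))"
      by (subst sum.swap) (simp add: tr_def)
    also have "\<dots> = (\<Sum>g\<in>Sym n. tr ?X)"
    proof (intro sum.cong refl)
      fix g assume g: "g \<in> Sym n"
      have "tr (RM \<rho> d g * ?X * RM \<rho> d (ginv g)) = tr (RM \<rho> d g * (?X * RM \<rho> d (ginv g)))"
        by (subst assoc_mult_mat[OF RM_carrier Emat_carrier RM_carrier]) rule
      also have "\<dots> = tr ((?X * RM \<rho> d (ginv g)) * RM \<rho> d g)"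
        by (rule tr_comm[OF RM_carrier mult_carrier_mat[OF Emat_carrier RM_carrier]])
      also have "(?X * RM \<rho> d (ginv g)) * RM \<rho> d g = ?X * (RM \<rho> d (ginv g) * RM \<rho> d g)"
        by (rule assoc_mult_mat[OF Emat_carrier RM_carrier RM_carrier])
      also have "\<dots> = ?X" using rep_inv1[OF r g] right_mult_one_mat[OF Emat_carrier] by simp
      finally show "tr (RM \<rho> d g * ?X * RM \<rho> d (ginv g)) = tr ?X" .
    qed
    also have "\<dots> = ?N * tr ?X" by simp
    finally have "c * of_nat d = ?N * tr ?X" using cT by (simp add: tr_smult_one)
    hence cval: "c = ?N * (if j = l then 1 else 0) / of_nat d" using d trX by (simp add: field_simps)
    have "(\<Sum>g\<in>Sym n. \<rho> g i j * \<rho> (ginv g) l k) = TX n \<rho> d \<rho> d ?X $$ (i,k)"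
      using ik by (simp add: TX_E_entry)
    also have "\<dots> = (if i = k then c else 0)" using cT ik by simp
    finally show ?thesis using cval by auto
  qed
  have "(\<Sum>g\<in>Sym n. tr (RM \<rho> d g) * tr (RM \<rho> d (ginv g)))
      = (\<Sum>g\<in>Sym n. \<Sum>i<d. \<Sum>k<d. \<rho> g i i * \<rho> (ginv g) k k)"
    by (intro sum.cong refl) (simp add: tr_expand sum_product)
  also have "\<dots> = (\<Sum>i<d. \<Sum>k<d. \<Sum>g\<in>Sym n. \<rho> g i i * \<rho> (ginv g) k k)"
    by (subst sum.swap) (subst (2) sum.swap, simp)
  also have "\<dots> = (\<Sum>i<d. \<Sum>k<d. if i = k then ?N / of_nat d else 0)"
    by (intro sum.cong refl) (simp add: c)
  also have "\<dots> = (\<Sum>i<d. ?N / of_nat d)" by simp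
  also have "\<dots> = ?N" using d by simp
  finally show ?thesis .
qed



definition adj :: "complex mat \<Rightarrow> complex mat" where
  "adj A = mat (dim_col A) (dim_row A) (\<lambda>(i,j). cnj (A $$ (j,i)))"

lemma adj_carrier[simp]: "A \<in> carrier_mat r c \<Longrightarrow> adj A \<in> carrier_mat c r"
proof -
  assume "A \<in> carrier_mat r c"
  hence "dim_row A = r" "dim_col A = c" by auto
  thus ?thesis unfolding adj_def by simp
qed

lemma adj_mult:
  assumes A: "A \<in> carrier_mat r k" and B: "B \<in> carrier_mat k c"
  shows "adj (A * B) = adj B * adj A"
proof (intro eq_matI)
  fix i j assume "i < dim_row (adj B * adj A)" "j < dim_col (adj B * adj A)"
  hence ij: "i < c" "j < r" using A B by (auto simp: adj_def)
  have "adj (A * B) $$ (i,j) = cnj ((A * B) $$ (j,i))" using ij A B by (simp add: adj_def)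
  also have "\<dots> = cnj (\<Sum>l<k. A $$ (j,l) * B $$ (l,i))" by (simp only: mult_entry[OF A B ij(2,1)])
  also have "\<dots> = (\<Sum>l<k. adj B $$ (i,l) * adj A $$ (l,j))"
    using ij A B by (auto simp: adj_def mult.commute intro!: sum.cong)
  also have "\<dots> = (adj B * adj A) $$ (i,j)"
    by (rule mult_entry[symmetric, OF adj_carrier[OF B] adj_carrier[OF A] ij])
  finally show "adj (A * B) $$ (i,j) = (adj B * adj A) $$ (i,j)" .
qed (use A B in \<open>auto simp: adj_def\<close>)

lemma tr_adj: "A \<in> carrier_mat d d \<Longrightarrow> tr (adj A) = cnj (tr A)"
  by (simp add: tr_def adj_def)

lemma adj_inner:
  assumes A: "A \<in> carrier_mat r c" and v: "v \<in> carrier_vec c" and w: "w \<in> carrier_vec r"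
  shows "(\<Sum>i<c. cnj (v $ i) * (adj A *\<^sub>v w) $ i) = (\<Sum>k<r. cnj ((A *\<^sub>v v) $ k) * w $ k)"
proof -
  have "(\<Sum>i<c. cnj (v $ i) * (adj A *\<^sub>v w) $ i) = (\<Sum>i<c. \<Sum>k<r. cnj (v $ i) * (cnj (A $$ (k,i)) * w $ k))"
  proof (intro sum.cong refl)
    fix i assume "i \<in> {..<c}"
    hence i: "i < c" by simp
    have "(adj A *\<^sub>v w) $ i = (\<Sum>k<r. cnj (A $$ (k,i)) * w $ k)"
      by (subst mv_entry[OF adj_carrier[OF A] w i]) (use A i in \<open>auto simp: adj_def intro!: sum.cong\<close>)
    thus "cnj (v $ i) * (adj A *\<^sub>v w) $ i = (\<Sum>k<r. cnj (v $ i) * (cnj (A $$ (k,i)) * w $ k))"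
      by (simp add: sum_distrib_left)
  qed
  also have "\<dots> = (\<Sum>k<r. \<Sum>i<c. cnj (v $ i) * (cnj (A $$ (k,i)) * w $ k))" by (rule sum.swap)
  also have "\<dots> = (\<Sum>k<r. cnj ((A *\<^sub>v v) $ k) * w $ k)"
    by (intro sum.cong refl) (simp add: mv_entry[OF A v] sum_distrib_right sum_distrib_left mult_ac)
  finally show ?thesis .
qed

lemma sum_nonneg_zeroD: "finite A \<Longrightarrow> (\<And>x. x \<in> A \<Longrightarrow> 0 \<le> f x) \<Longrightarrow> sum f A = (0::real) \<Longrightarrow> x \<in> A \<Longrightarrow> f x = 0"
  using sum_nonneg_eq_0_iff by blast

lemma bij_right_mult: "h \<in> Sym n \<Longrightarrow> bij_betw (\<lambda>g. g \<circ> h) (Sym n) (Sym n)"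
proof -
  assume h: "h \<in> Sym n"
  have 1: "(a \<circ> h) \<circ> ginv h = a" for a using Sym_inv_comp2[OF h] by (metis comp_assoc comp_id)
  have 2: "(a \<circ> ginv h) \<circ> h = a" for a using Sym_inv_comp1[OF h] by (metis comp_assoc comp_id)
  show ?thesis by (rule bij_betw_byWitness[of _ "\<lambda>g. g \<circ> ginv h"]) (use h 1 2 in auto)
qed

lemma conj_char:
  assumes r: "is_rep n d \<rho>" and h: "h \<in> Sym n"
  shows "cnj (tr (RM \<rho> d h)) = tr (RM \<rho> d (ginv h))"
proof -
  let ?R = "RM \<rho> d"
  define P where "P = mat d d (\<lambda>(i,j). \<Sum>g\<in>Sym n. (adj (?R g) * ?R g) $$ (i,j))"
  have P: "P \<in> carrier_mat d d" by (simp add: P_def)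
  have F: "\<And>g. adj (?R g) * ?R g \<in> carrier_mat d d"
    by (rule mult_carrier_mat[OF adj_carrier[OF RM_carrier] RM_carrier])
  have claim1: "adj (?R h) * P * ?R h = P"
  proof -
    have "adj (?R h) * P = mat d d (\<lambda>(i,j). \<Sum>g\<in>Sym n. (adj (?R h) * (adj (?R g) * ?R g)) $$ (i,j))"
      unfolding P_def by (rule sum_mat_left[OF adj_carrier[OF RM_carrier] F])
    moreover have "mat d d (\<lambda>(i,j). \<Sum>g\<in>Sym n. (adj (?R h) * (adj (?R g) * ?R g)) $$ (i,j)) * ?R h
       = mat d d (\<lambda>(i,j). \<Sum>g\<in>Sym n. (adj (?R h) * (adj (?R g) * ?R g) * ?R h) $$ (i,j))"
      by (rule sum_mat_right[OF RM_carrier]) (rule mult_carrier_mat[OF adj_carrier[OF RM_carrier] F])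
    ultimately have "adj (?R h) * P * ?R h = mat d d (\<lambda>(i,j). \<Sum>g\<in>Sym n. (adj (?R h) * (adj (?R g) * ?R g) * ?R h) $$ (i,j))"
      by simp
    also have "\<dots> = mat d d (\<lambda>(i,j). \<Sum>g\<in>Sym n. (adj (?R (g \<circ> h)) * ?R (g \<circ> h)) $$ (i,j))"
    proof -
      have "adj (?R h) * (adj (?R g) * ?R g) * ?R h = adj (?R (g \<circ> h)) * ?R (g \<circ> h)" if g: "g \<in> Sym n" for g
      proof -
        have Ah: "adj (?R h) \<in> carrier_mat d d" and Ag: "adj (?R g) \<in> carrier_mat d d"
          by (rule adj_carrier[OF RM_carrier])+
        have "adj (?R h) * (adj (?R g) * ?R g) * ?R h = adj (?R h) * ((adj (?R g) * ?R g) * ?R h)"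
          by (rule assoc_mult_mat[OF Ah F RM_carrier])
        also have "(adj (?R g) * ?R g) * ?R h = adj (?R g) * (?R g * ?R h)"
          by (rule assoc_mult_mat[OF Ag RM_carrier RM_carrier])
        also have "adj (?R h) * (adj (?R g) * (?R g * ?R h)) = (adj (?R h) * adj (?R g)) * (?R g * ?R h)"
          by (rule assoc_mult_mat[symmetric, OF Ah Ag mult_carrier_mat[OF RM_carrier RM_carrier]])
        also have "adj (?R h) * adj (?R g) = adj (?R g * ?R h)"
          by (rule adj_mult[symmetric, OF RM_carrier RM_carrier])
        also have "?R g * ?R h = ?R (g \<circ> h)" using rep_mult[OF r g h] by simp
        finally show ?thesis .
      qed
      thus ?thesis by (intro cong_mat refl sum.cong) auto
    qed
    also have "\<dots> = P"
    proof -
      have "(\<Sum>g\<in>Sym n. (adj (?R (g \<circ> h)) * ?R (g \<circ> h)) $$ (i,j)) = (\<Sum>g\<in>Sym n. (adj (?R g) * ?R g) $$ (i,j))" for i j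
        by (rule sum.reindex_bij_betw[OF bij_right_mult[OF h]])
      thus ?thesis unfolding P_def by simp
    qed
    finally show ?thesis .
  qed
  have Pv: "(P *\<^sub>v v) $ i = (\<Sum>g\<in>Sym n. (adj (?R g) *\<^sub>v (?R g *\<^sub>v v)) $ i)"
    if v: "v \<in> carrier_vec d" and i: "i < d" for v i
  proof -
    have "(P *\<^sub>v v) $ i = (\<Sum>j<d. (\<Sum>g\<in>Sym n. (adj (?R g) * ?R g) $$ (i,j)) * v $ j)"
      by (subst mv_entry[OF P v i]) (simp add: P_def i)
    also have "\<dots> = (\<Sum>g\<in>Sym n. \<Sum>j<d. (adj (?R g) * ?R g) $$ (i,j) * v $ j)"
      by (simp only: sum_distrib_right, rule sum.swap)
    also have "\<dots> = (\<Sum>g\<in>Sym n. ((adj (?R g) * ?R g) *\<^sub>v v) $ i)"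
      by (intro sum.cong refl) (simp only: mv_entry[OF F v i])
    also have "\<dots> = (\<Sum>g\<in>Sym n. (adj (?R g) *\<^sub>v (?R g *\<^sub>v v)) $ i)"
      by (intro sum.cong refl) (simp only: assoc_mult_mat_vec[OF adj_carrier[OF RM_carrier] RM_carrier v])
    finally show ?thesis .
  qed
  have claim2: "v = 0\<^sub>v d" if v: "v \<in> carrier_vec d" and Pv0: "P *\<^sub>v v = 0\<^sub>v d" for v
  proof -
    have "(\<Sum>i<d. cnj (v $ i) * (P *\<^sub>v v) $ i) = (\<Sum>i<d. (0::complex))"
    proof (rule sum.cong[OF refl])
      fix i assume "i \<in> {..<d}"
      hence "i < d" by simp
      thus "cnj (v $ i) * (P *\<^sub>v v) $ i = 0" using Pv0 by simp
    qed
    hence "0 = (\<Sum>i<d. cnj (v $ i) * (P *\<^sub>v v) $ i)" by simp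
    also have "\<dots> = (\<Sum>i<d. \<Sum>g\<in>Sym n. cnj (v $ i) * (adj (?R g) *\<^sub>v (?R g *\<^sub>v v)) $ i)"
    proof (rule sum.cong[OF refl])
      fix i assume "i \<in> {..<d}"
      hence "i < d" by simp
      thus "cnj (v $ i) * (P *\<^sub>v v) $ i = (\<Sum>g\<in>Sym n. cnj (v $ i) * (adj (?R g) *\<^sub>v (?R g *\<^sub>v v)) $ i)"
        by (simp only: Pv[OF v] sum_distrib_left)
    qed
    also have "\<dots> = (\<Sum>g\<in>Sym n. \<Sum>i<d. cnj (v $ i) * (adj (?R g) *\<^sub>v (?R g *\<^sub>v v)) $ i)"
      by (rule sum.swap)
    also have "\<dots> = (\<Sum>g\<in>Sym n. \<Sum>k<d. cnj ((?R g *\<^sub>v v) $ k) * (?R g *\<^sub>v v) $ k)"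
    proof (rule sum.cong[OF refl])
      fix g assume "g \<in> Sym n"
      have "?R g *\<^sub>v v \<in> carrier_vec d" using v by simp
      thus "(\<Sum>i<d. cnj (v $ i) * (adj (?R g) *\<^sub>v (?R g *\<^sub>v v)) $ i) = (\<Sum>k<d. cnj ((?R g *\<^sub>v v) $ k) * (?R g *\<^sub>v v) $ k)"
        by (rule adj_inner[OF RM_carrier v])
    qed
    also have "\<dots> = (\<Sum>g\<in>Sym n. \<Sum>k<d. of_real ((cmod ((?R g *\<^sub>v v) $ k))\<^sup>2))"
    proof (intro sum.cong refl)
      fix g k
      show "cnj ((?R g *\<^sub>v v) $ k) * (?R g *\<^sub>v v) $ k = of_real ((cmod ((?R g *\<^sub>v v) $ k))\<^sup>2)"
        by (subst complex_norm_square) (rule mult.commute)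
    qed
    also have "\<dots> = of_real (\<Sum>g\<in>Sym n. \<Sum>k<d. (cmod ((?R g *\<^sub>v v) $ k))\<^sup>2)"
      by (simp only: of_real_sum)
    finally have "complex_of_real (\<Sum>g\<in>Sym n. \<Sum>k<d. (cmod ((?R g *\<^sub>v v) $ k))\<^sup>2) = 0"
      by (rule sym)
    hence S0: "(\<Sum>g\<in>Sym n. \<Sum>k<d. (cmod ((?R g *\<^sub>v v) $ k))\<^sup>2) = 0"
      by (simp only: of_real_eq_0_iff)
    have "(\<Sum>k<d. (cmod ((?R id *\<^sub>v v) $ k))\<^sup>2) = 0"
      by (rule sum_nonneg_zeroD[OF Sym_finite _ S0 Sym_id]) (rule sum_nonneg, simp)
    moreover have "?R id *\<^sub>v v = v" using rep_id[OF r] v by simp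
    ultimately have S1: "(\<Sum>k<d. (cmod (v $ k))\<^sup>2) = 0" by simp
    have "\<forall>k\<in>{..<d}. (cmod (v $ k))\<^sup>2 = 0"
      using sum_nonneg_zeroD[OF finite_lessThan _ S1] by simp
    hence "\<And>k. k < d \<Longrightarrow> v $ k = 0" by simp
    thus ?thesis using v by (intro eq_vecI) auto
  qed
  have "det P \<noteq> 0"
  proof
    assume "det P = 0"
    then obtain v where "v \<in> carrier_vec d" "v \<noteq> 0\<^sub>v d" "P *\<^sub>v v = 0\<^sub>v d"
      using det_0_iff_vec_prod_zero[OF P] by blast
    thus False using claim2 by blast
  qed
  hence "P \<in> Units (ring_mat TYPE(complex) d ())" by (rule det_non_zero_imp_unit[OF P])
  then obtain B where B: "B \<in> carrier_mat d d" "B * P = 1\<^sub>m d" "P * B = 1\<^sub>m d"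
    unfolding Units_def ring_mat_def by auto
  have hi: "?R h * ?R (ginv h) = 1\<^sub>m d" by (rule rep_inv2[OF r h])
  have AP: "adj (?R h) * P = P * ?R (ginv h)"
  proof -
    have "adj (?R h) * P = adj (?R h) * P * (?R h * ?R (ginv h))"
      using hi right_mult_one_mat[OF mult_carrier_mat[OF adj_carrier[OF RM_carrier] P]] by simp
    also have "\<dots> = (adj (?R h) * P * ?R h) * ?R (ginv h)"
      by (rule assoc_mult_mat[symmetric, OF mult_carrier_mat[OF adj_carrier[OF RM_carrier] P] RM_carrier RM_carrier])
    also have "\<dots> = P * ?R (ginv h)" using claim1 by simp
    finally show ?thesis .
  qed
  have "cnj (tr (?R h)) = tr (adj (?R h))" by (rule tr_adj[OF RM_carrier, symmetric])
  also have "\<dots> = tr (adj (?R h) * (P * B))"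
    using B(3) right_mult_one_mat[OF adj_carrier[OF RM_carrier]] by simp
  also have "adj (?R h) * (P * B) = (adj (?R h) * P) * B"
    by (rule assoc_mult_mat[symmetric, OF adj_carrier[OF RM_carrier] P B(1)])
  also have "\<dots> = P * (?R (ginv h) * B)"
    unfolding AP by (rule assoc_mult_mat[OF P RM_carrier B(1)])
  also have "tr \<dots> = tr ((?R (ginv h) * B) * P)"
    by (rule tr_comm[OF P mult_carrier_mat[OF RM_carrier B(1)]])
  also have "\<dots> = tr (?R (ginv h) * (B * P))"
    by (subst assoc_mult_mat[OF RM_carrier B(1) P]) rule
  also have "\<dots> = tr (?R (ginv h))" using B(2) right_mult_one_mat[OF RM_carrier] by simp
  finally show ?thesis .
qed



lemma Irr_E:
  assumes "ch \<in> Irr n"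
  obtains d \<rho> where "is_irrep n d \<rho>" "ch = character n d \<rho>"
  using assms unfolding Irr_def by blast

lemma irr_rep: "is_irrep n d \<rho> \<Longrightarrow> is_rep n d \<rho>"
  by (simp add: is_irrep_def)

lemma char_outside: "g \<notin> Sym n \<Longrightarrow> character n d \<rho> g = 0"
  by (simp add: character_def)

lemma irr_orth:
  assumes c1: "ch \<in> Irr n" and c2: "ps \<in> Irr n"
  shows "(\<Sum>g\<in>Sym n. ch g * cnj (ps g)) = (if ch = ps then of_nat (fact n) else 0)"
proof -
  obtain d \<rho> where r: "is_irrep n d \<rho>" and chiE: "ch = character n d \<rho>" using c1 by (rule Irr_E)
  obtain e \<sigma> where s: "is_irrep n e \<sigma>" and psiE: "ps = character n e \<sigma>" using c2 by (rule Irr_E)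
  have "(\<Sum>g\<in>Sym n. ch g * cnj (ps g)) = (\<Sum>g\<in>Sym n. tr (RM \<rho> d g) * tr (RM \<sigma> e (ginv g)))"
    by (intro sum.cong refl) (simp add: chiE psiE character_tr conj_char[OF irr_rep[OF s]])
  also have "\<dots> = (if ch = ps then of_nat (fact n) else 0)"
  proof (cases "ch = ps")
    case True
    have "(\<Sum>g\<in>Sym n. tr (RM \<rho> d g) * tr (RM \<sigma> e (ginv g))) = (\<Sum>g\<in>Sym n. tr (RM \<rho> d g) * tr (RM \<rho> d (ginv g)))"
    proof (intro sum.cong refl)
      fix g assume g: "g \<in> Sym n"
      have "tr (RM \<sigma> e (ginv g)) = ps (ginv g)" using g by (simp add: psiE character_tr)
      also have "\<dots> = ch (ginv g)" using True by simp
      also have "\<dots> = tr (RM \<rho> d (ginv g))" using g by (simp add: chiE character_tr)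
      finally show "tr (RM \<rho> d g) * tr (RM \<sigma> e (ginv g)) = tr (RM \<rho> d g) * tr (RM \<rho> d (ginv g))" by simp
    qed
    also have "\<dots> = of_nat (fact n)" using orth_same[OF r] by (simp add: Sym_card)
    finally show ?thesis using True by simp
  next
    case False
    have "\<exists>g0\<in>Sym n. ch g0 \<noteq> ps g0"
    proof (rule ccontr)
      assume "\<not> ?thesis"
      hence "ch x = ps x" for x by (cases "x \<in> Sym n") (auto simp: chiE psiE char_outside)
      thus False using False by auto
    qed
    then obtain g0 where g0: "g0 \<in> Sym n" "tr (RM \<rho> d g0) \<noteq> tr (RM \<sigma> e g0)"
      by (auto simp: chiE psiE character_tr)
    from orth_diff[OF s r g0] show ?thesis using False by simp
  qed
  finally show ?thesis .
qed

lemma char_class: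
  assumes c: "ch \<in> Irr n" and s: "s \<in> Sym n" and g: "g \<in> Sym n"
  shows "ch (s \<circ> g \<circ> ginv s) = ch g"
proof -
  obtain d \<rho> where r: "is_irrep n d \<rho>" and chiE: "ch = character n d \<rho>" using c by (rule Irr_E)
  have rr: "is_rep n d \<rho>" using r by (rule irr_rep)
  let ?R = "RM \<rho> d"
  have "ch (s \<circ> g \<circ> ginv s) = tr (?R (s \<circ> g \<circ> ginv s))" using s g by (simp add: chiE character_tr)
  also have "?R (s \<circ> g \<circ> ginv s) = ?R s * ?R g * ?R (ginv s)"
    using rep_mult[OF rr Sym_comp[OF s g] Sym_inv[OF s]] rep_mult[OF rr s g] by simp
  also have "tr \<dots> = tr (?R s * (?R g * ?R (ginv s)))"
    by (subst assoc_mult_mat[OF RM_carrier RM_carrier RM_carrier]) rule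
  also have "\<dots> = tr ((?R g * ?R (ginv s)) * ?R s)"
    by (rule tr_comm[OF RM_carrier mult_carrier_mat[OF RM_carrier RM_carrier]])
  also have "(?R g * ?R (ginv s)) * ?R s = ?R g * (?R (ginv s) * ?R s)"
    by (rule assoc_mult_mat[OF RM_carrier RM_carrier RM_carrier])
  also have "\<dots> = ?R g" using rep_inv1[OF rr s] right_mult_one_mat[OF RM_carrier] by simp
  also have "tr (?R g) = ch g" using g by (simp add: chiE character_tr)
  finally show ?thesis .
qed

lemma char_id:
  assumes c: "ch \<in> Irr n"
  shows "ch id = of_real (Re (ch id))" "Re (ch id) \<ge> 0"
proof -
  obtain d \<rho> where r: "is_irrep n d \<rho>" and chiE: "ch = character n d \<rho>" using c by (rule Irr_E)
  have "ch id = of_nat d" using rep_id[OF irr_rep[OF r]] by (simp add: chiE character_tr)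
  thus "ch id = of_real (Re (ch id))" "Re (ch id) \<ge> 0" by simp_all
qed

lemma bessel:
  fixes F :: "('a \<Rightarrow> complex) set" and A :: "'a set" and f :: "'a \<Rightarrow> complex" and N :: real
  assumes A: "finite A" and F: "finite F" and N: "N > 0"
    and orth: "\<And>\<phi> ps. \<phi> \<in> F \<Longrightarrow> ps \<in> F \<Longrightarrow> (\<Sum>g\<in>A. \<phi> g * cnj (ps g)) = (if \<phi> = ps then of_real N else 0)"
  shows "(\<Sum>\<phi>\<in>F. (cmod (\<Sum>g\<in>A. f g * cnj (\<phi> g)))\<^sup>2) \<le> N * (\<Sum>g\<in>A. (cmod (f g))\<^sup>2)"
proof -
  define c where "c = (\<lambda>\<phi>. \<Sum>g\<in>A. f g * cnj (\<phi> g))"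
  define p where "p = (\<lambda>g. (\<Sum>\<phi>\<in>F. c \<phi> * \<phi> g) / of_real N)"
  define C where "C = (\<Sum>\<phi>\<in>F. (cmod (c \<phi>))\<^sup>2)"
  have Nc: "(of_real N :: complex) \<noteq> 0" using N by simp
  have L: "(\<Sum>g\<in>A. q g * cnj (p g)) = (\<Sum>\<phi>\<in>F. cnj (c \<phi>) * (\<Sum>g\<in>A. q g * cnj (\<phi> g))) / of_real N" for q
  proof -
    have "(\<Sum>g\<in>A. q g * cnj (p g)) = (\<Sum>g\<in>A. \<Sum>\<phi>\<in>F. q g * (cnj (c \<phi>) * cnj (\<phi> g)) / of_real N)"
      by (intro sum.cong refl) (simp add: p_def sum_distrib_left sum_divide_distrib)
    also have "\<dots> = (\<Sum>\<phi>\<in>F. \<Sum>g\<in>A. q g * (cnj (c \<phi>) * cnj (\<phi> g)) / of_real N)"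
      by (rule sum.swap)
    also have "\<dots> = (\<Sum>\<phi>\<in>F. cnj (c \<phi>) * (\<Sum>g\<in>A. q g * cnj (\<phi> g))) / of_real N"
      by (simp add: sum_divide_distrib sum_distrib_left mult_ac)
    finally show ?thesis .
  qed
  have CC: "(\<Sum>\<phi>\<in>F. cnj (c \<phi>) * c \<phi>) = of_real C"
    unfolding C_def of_real_sum
    by (intro sum.cong refl) (subst complex_norm_square, rule mult.commute)
  have e1: "(\<Sum>g\<in>A. f g * cnj (p g)) = of_real C / of_real N"
    using L[of f] CC by (simp add: c_def)
  have e_phi: "(\<Sum>g\<in>A. \<phi> g * cnj (p g)) = cnj (c \<phi>)" if ph: "\<phi> \<in> F" for \<phi>
  proof -
    have "(\<Sum>g\<in>A. \<phi> g * cnj (p g)) = (\<Sum>ps\<in>F. cnj (c ps) * (if \<phi> = ps then of_real N else 0)) / of_real N"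
      using L[of \<phi>] orth[OF ph] by simp
    also have "\<dots> = cnj (c \<phi>) * of_real N / of_real N"
      using ph F by (simp add: if_distrib[of "\<lambda>x. _ * x"] sum.delta cong: if_cong)
    also have "\<dots> = cnj (c \<phi>)" using Nc by simp
    finally show ?thesis .
  qed
  have e2: "(\<Sum>g\<in>A. p g * cnj (p g)) = of_real C / of_real N"
  proof -
    have "(\<Sum>g\<in>A. p g * cnj (p g)) = (\<Sum>g\<in>A. \<Sum>\<phi>\<in>F. c \<phi> * (\<phi> g * cnj (p g)) / of_real N)"
      by (intro sum.cong refl) (simp add: p_def sum_distrib_right sum_divide_distrib mult_ac)
    also have "\<dots> = (\<Sum>\<phi>\<in>F. \<Sum>g\<in>A. c \<phi> * (\<phi> g * cnj (p g)) / of_real N)"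
      by (rule sum.swap)
    also have "\<dots> = (\<Sum>\<phi>\<in>F. c \<phi> * (\<Sum>g\<in>A. \<phi> g * cnj (p g)) / of_real N)"
      by (simp add: sum_divide_distrib sum_distrib_left)
    also have "\<dots> = (\<Sum>\<phi>\<in>F. cnj (c \<phi>) * c \<phi>) / of_real N"
      by (simp add: e_phi sum_divide_distrib mult.commute cong: sum.cong)
    finally show ?thesis using CC by simp
  qed
  have e3: "(\<Sum>g\<in>A. p g * cnj (f g)) = of_real C / of_real N"
  proof -
    have "(\<Sum>g\<in>A. p g * cnj (f g)) = cnj (\<Sum>g\<in>A. f g * cnj (p g))"
      by (simp add: mult.commute)
    thus ?thesis using e1 by simp
  qed
  have ff: "(\<Sum>g\<in>A. f g * cnj (f g)) = of_real (\<Sum>g\<in>A. (cmod (f g))\<^sup>2)"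
    unfolding of_real_sum by (intro sum.cong refl) (rule complex_norm_square[symmetric])
  have "(\<Sum>g\<in>A. (f g - p g) * cnj (f g - p g))
      = (\<Sum>g\<in>A. f g * cnj (f g)) - (\<Sum>g\<in>A. f g * cnj (p g)) - (\<Sum>g\<in>A. p g * cnj (f g)) + (\<Sum>g\<in>A. p g * cnj (p g))"
    by (simp add: algebra_simps sum.distrib sum_subtractf)
  also have "\<dots> = of_real ((\<Sum>g\<in>A. (cmod (f g))\<^sup>2) - C / N)"
    by (simp add: ff e1 e2 e3)
  finally have eq0: "(\<Sum>g\<in>A. (f g - p g) * cnj (f g - p g)) = of_real ((\<Sum>g\<in>A. (cmod (f g))\<^sup>2) - C / N)" .
  have "(\<Sum>g\<in>A. (f g - p g) * cnj (f g - p g)) = of_real (\<Sum>g\<in>A. (cmod (f g - p g))\<^sup>2)"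
    unfolding of_real_sum by (intro sum.cong refl) (rule complex_norm_square[symmetric])
  with eq0 have eq: "of_real (\<Sum>g\<in>A. (cmod (f g - p g))\<^sup>2) = (of_real ((\<Sum>g\<in>A. (cmod (f g))\<^sup>2) - C / N) :: complex)"
    by simp
  have "0 \<le> (\<Sum>g\<in>A. (cmod (f g - p g))\<^sup>2)" by (intro sum_nonneg) simp
  also have "\<dots> = (\<Sum>g\<in>A. (cmod (f g))\<^sup>2) - C / N" using eq by (simp only: of_real_eq_iff)
  finally have "C / N \<le> (\<Sum>g\<in>A. (cmod (f g))\<^sup>2)" by simp
  hence "C \<le> N * (\<Sum>g\<in>A. (cmod (f g))\<^sup>2)" using N by (simp add: field_simps)
  thus ?thesis by (simp add: C_def c_def)
qed



lemma Sym_inv_pt1[simp]: "g \<in> Sym n \<Longrightarrow> ginv g (g x) = x"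
proof -
  assume g: "g \<in> Sym n"
  from fun_cong[OF Sym_inv_comp1[OF g], of x] show ?thesis by simp
qed

lemma Sym_inv_pt2[simp]: "g \<in> Sym n \<Longrightarrow> g (ginv g x) = x"
proof -
  assume g: "g \<in> Sym n"
  from fun_cong[OF Sym_inv_comp2[OF g], of x] show ?thesis by simp
qed

lemma bij_conj: "s \<in> Sym n \<Longrightarrow> bij_betw (\<lambda>g. ginv s \<circ> g \<circ> s) (Sym n) (Sym n)"
proof -
  assume s: "s \<in> Sym n"
  have 1: "s \<circ> (ginv s \<circ> g \<circ> s) \<circ> ginv s = g" for g
    using s by (simp add: fun_eq_iff)
  have 2: "ginv s \<circ> (s \<circ> g \<circ> ginv s) \<circ> s = g" for g
    using s by (simp add: fun_eq_iff)
  show ?thesis by (rule bij_betw_byWitness[of _ "\<lambda>g. s \<circ> g \<circ> ginv s"]) (use s 1 2 in auto)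
qed

lemma card_as_sum: "finite A \<Longrightarrow> (of_nat (card {s\<in>A. P s}) :: 'b::comm_ring_1) = (\<Sum>s\<in>A. if P s then 1 else 0)"
  by (simp add: sum.If_cases Int_def)

lemma conj_avg:
  fixes \<phi> :: "(nat \<Rightarrow> nat) \<Rightarrow> 'b::comm_ring_1"
  assumes H: "H' \<subseteq> Sym n"
    and cl: "\<And>t g. t \<in> Sym n \<Longrightarrow> g \<in> Sym n \<Longrightarrow> \<phi> (t \<circ> g \<circ> ginv t) = \<phi> g"
  shows "(\<Sum>g\<in>Sym n. of_nat (card {s\<in>Sym n. s \<circ> g \<circ> ginv s \<in> H'}) * \<phi> g) = of_nat (fact n) * (\<Sum>h\<in>H'. \<phi> h)"
proof -
  have "(\<Sum>g\<in>Sym n. of_nat (card {s\<in>Sym n. s \<circ> g \<circ> ginv s \<in> H'}) * \<phi> g)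
      = (\<Sum>g\<in>Sym n. \<Sum>s\<in>Sym n. (if s \<circ> g \<circ> ginv s \<in> H' then \<phi> g else 0))"
    by (intro sum.cong refl) (simp add: card_as_sum sum_distrib_right, intro sum.cong refl, simp)
  also have "\<dots> = (\<Sum>s\<in>Sym n. \<Sum>g\<in>Sym n. (if s \<circ> g \<circ> ginv s \<in> H' then \<phi> g else 0))"
    by (rule sum.swap)
  also have "\<dots> = (\<Sum>s\<in>Sym n. \<Sum>h\<in>H'. \<phi> h)"
  proof (rule sum.cong[OF refl])
    fix s assume s: "s \<in> Sym n"
    have "(\<Sum>g\<in>Sym n. (if s \<circ> g \<circ> ginv s \<in> H' then \<phi> g else 0))
        = (\<Sum>g\<in>Sym n. (if s \<circ> (ginv s \<circ> g \<circ> s) \<circ> ginv s \<in> H' then \<phi> (ginv s \<circ> g \<circ> s) else 0))"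
      by (rule sum.reindex_bij_betw[OF bij_conj[OF s], symmetric])
    also have "\<dots> = (\<Sum>g\<in>Sym n. (if g \<in> H' then \<phi> g else 0))"
    proof (intro sum.cong refl)
      fix g assume g: "g \<in> Sym n"
      have "s \<circ> (ginv s \<circ> g \<circ> s) \<circ> ginv s = g"
        using s by (simp add: fun_eq_iff)
      moreover have "\<phi> (ginv s \<circ> g \<circ> s) = \<phi> g"
        using cl[OF Sym_inv[OF s] g] s by simp
      ultimately show "(if s \<circ> (ginv s \<circ> g \<circ> s) \<circ> ginv s \<in> H' then \<phi> (ginv s \<circ> g \<circ> s) else 0) = (if g \<in> H' then \<phi> g else 0)"
        by simp
    qed
    also have "\<dots> = (\<Sum>h\<in>H'. \<phi> h)"
      using H by (simp add: sum.If_cases Int_absorb1)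
    finally show "(\<Sum>g\<in>Sym n. (if s \<circ> g \<circ> ginv s \<in> H' then \<phi> g else 0)) = (\<Sum>h\<in>H'. \<phi> h)" .
  qed
  also have "\<dots> = of_nat (fact n) * (\<Sum>h\<in>H'. \<phi> h)" by (simp add: Sym_card)
  finally show ?thesis .
qed

definition Pf :: "nat \<Rightarrow> (nat \<Rightarrow> nat) set \<Rightarrow> (nat \<Rightarrow> nat) \<Rightarrow> real" where
  "Pf n H' g = real (card {s\<in>Sym n. s \<circ> g \<circ> ginv s \<in> H'}) / fact n"

lemma Pf_nonneg: "Pf n H' g \<ge> 0"
  by (simp add: Pf_def)

lemma Pf_class:
  assumes t: "t \<in> Sym n" and g: "g \<in> Sym n"
  shows "Pf n H' (t \<circ> g \<circ> ginv t) = Pf n H' g"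
proof -
  have "card {s\<in>Sym n. s \<circ> (t \<circ> g \<circ> ginv t) \<circ> ginv s \<in> H'} = card {s\<in>Sym n. s \<circ> g \<circ> ginv s \<in> H'}"
  proof (rule bij_betw_same_card[of "\<lambda>s. s \<circ> t"])
    have eq: "(s \<circ> t) \<circ> g \<circ> ginv (s \<circ> t) = s \<circ> (t \<circ> g \<circ> ginv t) \<circ> ginv s" if "s \<in> Sym n" for s
      using that t by (simp add: Sym_inv_comp_distrib fun_eq_iff)
    have eq2: "(s \<circ> ginv t) \<circ> (t \<circ> g \<circ> ginv t) \<circ> ginv (s \<circ> ginv t) = s \<circ> g \<circ> ginv s" if "s \<in> Sym n" for s
      using that t by (simp add: Sym_inv_comp_distrib fun_eq_iff)
    have eq3: "s \<circ> t \<circ> ginv t = s" "s \<circ> ginv t \<circ> t = s" for s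
      using t by (simp_all add: fun_eq_iff)
    show "bij_betw (\<lambda>s. s \<circ> t) {s\<in>Sym n. s \<circ> (t \<circ> g \<circ> ginv t) \<circ> ginv s \<in> H'} {s\<in>Sym n. s \<circ> g \<circ> ginv s \<in> H'}"
      by (rule bij_betw_byWitness[of _ "\<lambda>s. s \<circ> ginv t"]) (use t eq eq2 eq3 in auto)
  qed
  thus ?thesis by (simp add: Pf_def)
qed



lemma D_H_bound:
  assumes H: "H \<subseteq> Sym n"
  shows "D_H n H \<le> sqrt (\<Sum>h\<in>H - {id}. Pf n (H - {id}) h)"
proof -
  define H' where "H' = H - {id}"
  have H': "H' \<subseteq> Sym n" using H by (auto simp: H'_def)
  define S where "S = (\<Sum>h\<in>H'. Pf n H' h)"
  have S0: "S \<ge> 0" unfolding S_def by (intro sum_nonneg) (rule Pf_nonneg)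
  show ?thesis
  proof (cases "finite (Irr n)")
    case False
    thus ?thesis using S0 unfolding D_H_def by (simp add: S_def H'_def)
  next
    case fin: True
    define N where "N = real (fact n)"
    have N: "N > 0" by (simp add: N_def)
    have cardS: "real (card (Sym n)) = N" by (simp add: N_def Sym_card)
    have orth: "\<And>\<phi> \<psi>. \<phi> \<in> Irr n \<Longrightarrow> \<psi> \<in> Irr n \<Longrightarrow> (\<Sum>g\<in>Sym n. \<phi> g * cnj (\<psi> g)) = (if \<phi> = \<psi> then of_real N else 0)"
      by (simp add: irr_orth N_def)
    define dd where "dd = (\<lambda>ch::(nat\<Rightarrow>nat)\<Rightarrow>complex. Re (ch id))"
    define aa where "aa = (\<lambda>ch::(nat\<Rightarrow>nat)\<Rightarrow>complex. cmod (\<Sum>h\<in>H'. ch h))"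
    have s1: "(\<Sum>ch\<in>Irr n. (dd ch)\<^sup>2) \<le> N"
    proof -
      define f1 where "f1 = (\<lambda>g::nat\<Rightarrow>nat. if g = id then (1::complex) else 0)"
      have B: "(\<Sum>ch\<in>Irr n. (cmod (\<Sum>g\<in>Sym n. f1 g * cnj (ch g)))\<^sup>2) \<le> N * (\<Sum>g\<in>Sym n. (cmod (f1 g))\<^sup>2)"
        by (rule bessel[OF Sym_finite fin N orth])
      have t1: "(cmod (\<Sum>g\<in>Sym n. f1 g * cnj (ch g)))\<^sup>2 = (dd ch)\<^sup>2" if ch: "ch \<in> Irr n" for ch
      proof -
        have "(\<Sum>g\<in>Sym n. f1 g * cnj (ch g)) = cnj (ch id)"
          by (simp add: f1_def if_distrib[of "\<lambda>x. x * _"] sum.delta cong: if_cong)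
        also have "ch id = of_real (dd ch)" using char_id(1)[OF ch] by (simp add: dd_def)
        finally show ?thesis by simp
      qed
      have t2: "(\<Sum>g\<in>Sym n. (cmod (f1 g))\<^sup>2) = 1"
        by (simp add: f1_def if_distrib[of "\<lambda>x. (cmod x)\<^sup>2"] sum.delta cong: if_cong)
      show ?thesis using B t1 t2 by simp
    qed
    have s3: "(\<Sum>g\<in>Sym n. (Pf n H' g)\<^sup>2) = S"
    proof -
      have "(\<Sum>g\<in>Sym n. of_nat (card {s\<in>Sym n. s \<circ> g \<circ> ginv s \<in> H'}) * Pf n H' g) = of_nat (fact n) * (\<Sum>h\<in>H'. Pf n H' h)"
        by (rule conj_avg[OF H']) (rule Pf_class)
      hence "(\<Sum>g\<in>Sym n. N * Pf n H' g * Pf n H' g) = N * S"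
        by (simp add: Pf_def N_def S_def)
      hence "N * (\<Sum>g\<in>Sym n. Pf n H' g * Pf n H' g) = N * S"
        by (simp add: sum_distrib_left mult.assoc)
      thus ?thesis using N by (simp add: power2_eq_square)
    qed
    have s2: "(\<Sum>ch\<in>Irr n. (aa ch)\<^sup>2) \<le> N * S"
    proof -
      define f2 where "f2 = (\<lambda>g. complex_of_real (Pf n H' g))"
      have B: "(\<Sum>ch\<in>Irr n. (cmod (\<Sum>g\<in>Sym n. f2 g * cnj (ch g)))\<^sup>2) \<le> N * (\<Sum>g\<in>Sym n. (cmod (f2 g))\<^sup>2)"
        by (rule bessel[OF Sym_finite fin N orth])
      have t1: "cmod (\<Sum>g\<in>Sym n. f2 g * cnj (ch g)) = aa ch" if ch: "ch \<in> Irr n" for ch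
      proof -
        have avg: "(\<Sum>g\<in>Sym n. of_nat (card {s\<in>Sym n. s \<circ> g \<circ> ginv s \<in> H'}) * ch g) = of_nat (fact n) * (\<Sum>h\<in>H'. ch h)"
          by (rule conj_avg[OF H']) (rule char_class[OF ch])
        have "(\<Sum>g\<in>Sym n. f2 g * ch g) = (\<Sum>g\<in>Sym n. of_nat (card {s\<in>Sym n. s \<circ> g \<circ> ginv s \<in> H'}) * ch g) / of_real N"
          by (simp add: f2_def Pf_def N_def sum_divide_distrib)
        also have "\<dots> = (\<Sum>h\<in>H'. ch h)" using avg N by (simp add: N_def)
        finally have "(\<Sum>g\<in>Sym n. f2 g * ch g) = (\<Sum>h\<in>H'. ch h)" .
        moreover have "(\<Sum>g\<in>Sym n. f2 g * cnj (ch g)) = cnj (\<Sum>g\<in>Sym n. f2 g * ch g)"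
          by (simp add: f2_def)
        ultimately have "(\<Sum>g\<in>Sym n. f2 g * cnj (ch g)) = cnj (\<Sum>h\<in>H'. ch h)" by simp
        hence "cmod (\<Sum>g\<in>Sym n. f2 g * cnj (ch g)) = cmod (cnj (\<Sum>h\<in>H'. ch h))" by (rule arg_cong)
        thus ?thesis by (simp only: complex_mod_cnj aa_def)
      qed
      have t2: "(\<Sum>g\<in>Sym n. (cmod (f2 g))\<^sup>2) = S"
        using s3 by (simp add: f2_def)
      show ?thesis using B t1 t2 by simp
    qed
    have "(\<Sum>ch\<in>Irr n. dd ch * aa ch)\<^sup>2 \<le> (\<Sum>ch\<in>Irr n. (dd ch)\<^sup>2) * (\<Sum>ch\<in>Irr n. (aa ch)\<^sup>2)"
      by (rule Cauchy_Schwarz_ineq_sum)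
    also have "\<dots> \<le> N * (N * S)"
      by (rule mult_mono[OF s1 s2]) (use N in \<open>auto intro: sum_nonneg\<close>)
    finally have "(\<Sum>ch\<in>Irr n. dd ch * aa ch) \<le> sqrt (N * (N * S))" by (rule real_le_rsqrt)
    also have "sqrt (N * (N * S)) = N * sqrt S" using N S0 by (simp add: real_sqrt_mult)
    finally have main: "(\<Sum>ch\<in>Irr n. dd ch * aa ch) \<le> N * sqrt S" .
    have "D_H n H = (1 / N) * (\<Sum>ch\<in>Irr n. dd ch * aa ch)"
      unfolding D_H_def cardS dd_def aa_def H'_def by simp
    also have "\<dots> \<le> (1 / N) * (N * sqrt S)" using main N by (intro mult_left_mono) auto
    also have "\<dots> = sqrt S" using N by simp
    finally show ?thesis by (simp add: S_def H'_def)
  qed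
qed



lemma orbit_reps:
  assumes "inj h" "finite A" "\<And>y. y \<in> A \<longleftrightarrow> h y \<in> A" "\<And>y. y \<in> A \<Longrightarrow> h y \<noteq> y"
  shows "\<exists>R\<subseteq>A. 2 * card R \<le> card A \<and> (\<forall>x\<in>A. \<exists>r\<in>R. \<exists>j. x = (h^^j) r)"
  using assms
proof (induction "card A" arbitrary: A rule: less_induct)
  case less
  note inj = less.prems(1) and fin = less.prems(2) and cl = less.prems(3) and mv = less.prems(4)
  show ?case
  proof (cases "A = {}")
    case True
    thus ?thesis by auto
  next
    case False
    then obtain x where x: "x \<in> A" by auto
    define Orb where "Orb = range (\<lambda>j. (h^^j) x)"
    have OA: "Orb \<subseteq> A"
    proof -
      have "(h^^j) x \<in> A" for j by (induction j) (use x cl in auto)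
      thus ?thesis by (auto simp: Orb_def)
    qed
    have finO: "finite Orb" using OA fin by (rule finite_subset)
    have injp: "inj (h^^i)" for i using inj by simp
    have "\<exists>m>0. (h^^m) x = x"
    proof -
      have "\<not> inj_on (\<lambda>j. (h^^j) x) {0..card A}"
      proof
        assume "inj_on (\<lambda>j. (h^^j) x) {0..card A}"
        hence "card ((\<lambda>j. (h^^j) x) ` {0..card A}) = card {0..card A}" by (rule card_image)
        moreover have "(\<lambda>j. (h^^j) x) ` {0..card A} \<subseteq> A" using OA by (auto simp: Orb_def)
        hence "card ((\<lambda>j. (h^^j) x) ` {0..card A}) \<le> card A" using fin by (rule card_mono[rotated])
        ultimately show False by simp
      qed
      then obtain i j where ij: "i \<noteq> j" "(h^^i) x = (h^^j) x" unfolding inj_on_def by auto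
      have aux: "\<exists>m>0. (h^^m) x = x" if "i < j" "(h^^i) x = (h^^j) x" for i j
      proof -
        have jj: "j = i + (j - i)" using that(1) by simp
        have "(h^^j) x = (h^^(i + (j - i))) x" by (subst jj) (rule refl)
        also have "\<dots> = (h^^i) ((h^^(j - i)) x)" by (simp only: funpow_add comp_apply)
        finally have "(h^^i) x = (h^^i) ((h^^(j - i)) x)" using that(2) by simp
        hence "x = (h^^(j - i)) x" using injp[of i] by (auto dest: injD)
        thus ?thesis using that by (intro exI[of _ "j - i"]) auto
      qed
      show ?thesis
      proof (cases "i < j")
        case True thus ?thesis using aux ij by blast
      next
        case False hence "j < i" using ij by simp
        thus ?thesis using aux[of j i] ij(2) by simp
      qed
    qed
    then obtain m where m: "m > 0" "(h^^m) x = x" by blast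
    have Opre: "y \<in> Orb" if "h y \<in> Orb" for y
    proof -
      from that obtain j where j: "h y = (h^^j) x" unfolding Orb_def by blast
      show ?thesis
      proof (cases j)
        case 0
        have "h y = (h^^m) x" using j 0 m by simp
        also have "\<dots> = h ((h^^(m - 1)) x)" using m(1) by (cases m) auto
        finally have "y = (h^^(m - 1)) x" using inj by (auto dest: injD)
        thus ?thesis by (auto simp: Orb_def)
      next
        case (Suc j')
        hence "h y = h ((h^^j') x)" using j by simp
        hence "y = (h^^j') x" using inj by (auto dest: injD)
        thus ?thesis by (auto simp: Orb_def)
      qed
    qed
    have Opost: "h y \<in> Orb" if "y \<in> Orb" for y
    proof -
      from that obtain j where "y = (h^^j) x" unfolding Orb_def by blast
      hence "h y = (h^^(Suc j)) x" by simp
      thus ?thesis unfolding Orb_def by (rule range_eqI)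
    qed
    define A' where "A' = A - Orb"
    have xO: "x \<in> Orb" unfolding Orb_def by (rule range_eqI[of _ _ 0]) simp
    have hxO: "h x \<in> Orb" using Opost[OF xO] .
    have cardO: "card Orb \<ge> 2"
    proof -
      have "{x, h x} \<subseteq> Orb" using xO hxO by auto
      moreover have "card {x, h x} = 2" using mv[OF x] by auto
      ultimately show ?thesis using card_mono[OF finO, of "{x, h x}"] by simp
    qed
    have cardA: "card A = card A' + card Orb"
      unfolding A'_def using card_Diff_subset[OF finO OA] card_mono[OF fin OA] by simp
    have lt: "card A' < card A" using cardA cardO by simp
    have "\<exists>R\<subseteq>A'. 2 * card R \<le> card A' \<and> (\<forall>x\<in>A'. \<exists>r\<in>R. \<exists>j. x = (h^^j) r)"
    proof (rule less.hyps[OF lt inj])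
      show "finite A'" using fin by (simp add: A'_def)
      show "y \<in> A' \<longleftrightarrow> h y \<in> A'" for y
        using cl[of y] Opre[of y] Opost[of y] by (auto simp: A'_def)
      show "h y \<noteq> y" if "y \<in> A'" for y using that mv by (auto simp: A'_def)
    qed
    then obtain R' where R': "R' \<subseteq> A'" "2 * card R' \<le> card A'" "\<forall>y\<in>A'. \<exists>r\<in>R'. \<exists>j. y = (h^^j) r" by blast
    have finR': "finite R'" using R'(1) fin by (auto simp: A'_def intro: finite_subset)
    show ?thesis
    proof (intro exI[of _ "insert x R'"] conjI)
      show "insert x R' \<subseteq> A" using x R'(1) by (auto simp: A'_def)
      have "card (insert x R') \<le> card R' + 1" using finR' by (simp add: card_insert_if)
      thus "2 * card (insert x R') \<le> card A" using R'(2) cardA cardO by simp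
      show "\<forall>y\<in>A. \<exists>r\<in>insert x R'. \<exists>j. y = (h^^j) r"
      proof
        fix y assume y: "y \<in> A"
        show "\<exists>r\<in>insert x R'. \<exists>j. y = (h^^j) r"
        proof (cases "y \<in> Orb")
          case True thus ?thesis by (auto simp: Orb_def)
        next
          case False
          hence "y \<in> A'" using y by (simp add: A'_def)
          thus ?thesis using R'(3) by blast
        qed
      qed
    qed
  qed
qed



lemma Sym_perm: "h \<in> Sym n \<Longrightarrow> h permutes {1..n}"
  by (simp add: Sym_def)

lemma Sym_moved: "h \<in> Sym n \<Longrightarrow> {x. h x \<noteq> x} \<subseteq> {1..n}"
  using permutes_not_in[OF Sym_perm] by blast

lemma supp_le: "h \<in> Sym n \<Longrightarrow> supp h \<le> n"
proof -
  assume h: "h \<in> Sym n"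
  have "card {x. h x \<noteq> x} \<le> card {1..n}" by (rule card_mono[OF finite_atLeastAtMost Sym_moved[OF h]])
  thus ?thesis by (simp add: supp_def)
qed

lemma Sym_inj: "h \<in> Sym n \<Longrightarrow> inj h"
  using Sym_bij bij_is_inj by blast

lemma commute_pow: "t \<circ> h = h \<circ> t \<Longrightarrow> t ((h^^j) y) = (h^^j) (t y)"
proof (induction j)
  case (Suc j)
  have "t (h ((h^^j) y)) = h (t ((h^^j) y))" using fun_cong[OF Suc.prems, of "(h^^j) y"] by simp
  thus ?case using Suc by simp
qed simp

lemma centralizer_bound:
  assumes h: "h \<in> Sym n"
  shows "card {t\<in>Sym n. t \<circ> h = h \<circ> t} \<le> fact (n - supp h) * supp h ^ (supp h div 2)"
proof -
  define M where "M = {x. h x \<noteq> x}"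
  define k where "k = supp h"
  have Msub: "M \<subseteq> {1..n}" using Sym_moved[OF h] by (simp add: M_def)
  have finM: "finite M" using Msub finite_subset by blast
  have cardM: "card M = k" by (simp add: M_def k_def supp_def)
  have injh: "inj h" by (rule Sym_inj[OF h])
  have "\<exists>R\<subseteq>M. 2 * card R \<le> card M \<and> (\<forall>x\<in>M. \<exists>r\<in>R. \<exists>j. x = (h^^j) r)"
  proof (rule orbit_reps[OF injh finM])
    show "y \<in> M \<longleftrightarrow> h y \<in> M" for y
    proof
      assume "y \<in> M"
      hence "h y \<noteq> y" by (simp add: M_def)
      hence "h (h y) \<noteq> h y" using injh by (auto dest: injD)
      thus "h y \<in> M" by (simp add: M_def)
    next
      assume "h y \<in> M"
      thus "y \<in> M" by (auto simp: M_def)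
    qed
    show "h y \<noteq> y" if "y \<in> M" for y using that by (simp add: M_def)
  qed
  then obtain R where R: "R \<subseteq> M" "2 * card R \<le> k" "\<forall>x\<in>M. \<exists>r\<in>R. \<exists>j. x = (h^^j) r"
    using cardM by blast
  have finR: "finite R" using R(1) finM finite_subset by blast
  define F where "F = {1..n} - M"
  have finF: "finite F" by (simp add: F_def)
  have cardF: "card F = n - k" unfolding F_def using card_Diff_subset[OF finM Msub] cardM by simp
  define C where "C = {t\<in>Sym n. t \<circ> h = h \<circ> t}"
  define \<Phi> where "\<Phi> = (\<lambda>t. ((\<lambda>x. if x \<in> F then t x else x), restrict t R))"
  define T where "T = {p. p permutes F} \<times> (R \<rightarrow>\<^sub>E M)"
  have finT: "finite T" unfolding T_def using finite_permutations[OF finF] finite_PiE[OF finR, of "\<lambda>_. M"] finM by auto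
  have cardT: "card T = fact (n - k) * k ^ card R"
    unfolding T_def card_cartesian_product card_permutations[OF cardF finF] card_funcsetE[OF finR] cardM by simp
  have tS: "t \<in> Sym n" and com: "t \<circ> h = h \<circ> t" if "t \<in> C" for t
    using that by (auto simp: C_def)
  have tp: "t permutes {1..n}" if "t \<in> C" for t using Sym_perm[OF tS[OF that]] .
  have it: "inj t" if "t \<in> C" for t using Sym_inj[OF tS[OF that]] .
  have c: "t (h z) = h (t z)" if "t \<in> C" for t z using fun_cong[OF com[OF that], of z] by simp
  have tF: "t x \<in> F" if t: "t \<in> C" and x: "x \<in> F" for t x
  proof -
    have "x \<in> {1..n}" "h x = x" using x by (auto simp: F_def M_def)
    hence "t x \<in> {1..n}" "h (t x) = t x" using permutes_in_image[OF tp[OF t]] c[OF t, of x] by auto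
    thus "t x \<in> F" by (auto simp: F_def M_def)
  qed
  have tM: "t y \<in> M" if t: "t \<in> C" and y: "y \<in> M" for t y
  proof -
    have "h y \<noteq> y" using y by (simp add: M_def)
    hence "t (h y) \<noteq> t y" using it[OF t] by (auto dest: injD)
    thus "t y \<in> M" using c[OF t, of y] by (simp add: M_def)
  qed
  have img: "\<Phi> ` C \<subseteq> T"
  proof
    fix z assume "z \<in> \<Phi> ` C"
    then obtain t where t: "t \<in> C" and z: "z = \<Phi> t" by auto
    let ?p = "\<lambda>x. if x \<in> F then t x else x"
    have "?p ` F \<subseteq> F" using tF[OF t] by auto
    moreover have "inj_on ?p F" using it[OF t] by (auto simp: inj_on_def dest: injD)
    ultimately have "?p ` F = F" using endo_inj_surj[OF finF] by blast
    hence "bij_betw ?p F F" using \<open>inj_on ?p F\<close> by (simp add: bij_betw_def)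
    hence "?p permutes F" by (rule bij_imp_permutes) simp
    moreover have "restrict t R \<in> R \<rightarrow>\<^sub>E M" using tM[OF t] R(1) by auto
    ultimately show "z \<in> T" by (simp add: z \<Phi>_def T_def)
  qed
  have inj: "inj_on \<Phi> C"
  proof (rule inj_onI)
    fix t1 t2 assume t1: "t1 \<in> C" and t2: "t2 \<in> C" and eq: "\<Phi> t1 = \<Phi> t2"
    have e1: "t1 x = t2 x" if "x \<in> F" for x
      using fun_cong[OF arg_cong[OF eq, of fst], of x] that by (simp add: \<Phi>_def)
    have e2: "t1 r = t2 r" if "r \<in> R" for r
      using fun_cong[OF arg_cong[OF eq, of snd], of r] that by (simp add: \<Phi>_def)
    show "t1 = t2"
    proof
      fix x
      show "t1 x = t2 x"
      proof (cases "x \<in> {1..n}")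
        case False
        thus ?thesis using permutes_not_in[OF tp[OF t1]] permutes_not_in[OF tp[OF t2]] by simp
      next
        case True
        show ?thesis
        proof (cases "x \<in> M")
          case False
          thus ?thesis using True e1 by (simp add: F_def)
        next
          case xM: True
          then obtain r j where r: "r \<in> R" "x = (h^^j) r" using R(3) by blast
          have "t1 x = (h^^j) (t1 r)" using commute_pow[OF com[OF t1]] r(2) by simp
          also have "\<dots> = (h^^j) (t2 r)" using e2[OF r(1)] by simp
          also have "\<dots> = t2 x" using commute_pow[OF com[OF t2]] r(2) by simp
          finally show ?thesis .
        qed
      qed
    qed
  qed
  have "card C \<le> card T" by (rule card_inj_on_le[OF inj img finT])
  also have "\<dots> = fact (n - k) * k ^ card R" by (rule cardT)
  also have "\<dots> \<le> fact (n - k) * k ^ (k div 2)"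
  proof (rule mult_left_mono)
    have cR: "card R \<le> k div 2" using R(2) by simp
    show "k ^ card R \<le> k ^ (k div 2)"
    proof (cases "k = 0")
      case True thus ?thesis using cR by simp
    next
      case False thus ?thesis using cR by (intro power_increasing) auto
    qed
  qed simp
  finally show ?thesis by (simp add: C_def k_def)
qed

lemma conj_count:
  assumes h: "h \<in> Sym n"
  shows "card {s\<in>Sym n. s \<circ> h \<circ> ginv s = h'} \<le> card {t\<in>Sym n. t \<circ> h = h \<circ> t}"
proof (cases "{s\<in>Sym n. s \<circ> h \<circ> ginv s = h'} = {}")
  case True show ?thesis by (subst True) simp
next
  case False
  then obtain s0 where s0: "s0 \<in> Sym n" "s0 \<circ> h \<circ> ginv s0 = h'" by auto
  have h'x: "h' z = s0 (h (ginv s0 z))" for z using s0(2) by auto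
  show ?thesis
  proof (rule card_inj_on_le[of "\<lambda>s. ginv s0 \<circ> s"])
    show "inj_on (\<lambda>s. ginv s0 \<circ> s) {s\<in>Sym n. s \<circ> h \<circ> ginv s = h'}"
    proof (rule inj_onI)
      fix s1 s2 assume "ginv s0 \<circ> s1 = ginv s0 \<circ> s2"
      hence "ginv s0 (s1 x) = ginv s0 (s2 x)" for x by (metis comp_apply)
      hence "s0 (ginv s0 (s1 x)) = s0 (ginv s0 (s2 x))" for x by simp
      thus "s1 = s2" using s0(1) by (simp add: fun_eq_iff)
    qed
    show "(\<lambda>s. ginv s0 \<circ> s) ` {s\<in>Sym n. s \<circ> h \<circ> ginv s = h'} \<subseteq> {t\<in>Sym n. t \<circ> h = h \<circ> t}"
    proof
      fix z assume "z \<in> (\<lambda>s. ginv s0 \<circ> s) ` {s\<in>Sym n. s \<circ> h \<circ> ginv s = h'}"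
      then obtain s where s: "s \<in> Sym n" "s \<circ> h \<circ> ginv s = h'" and z: "z = ginv s0 \<circ> s" by auto
      have sh: "s (h x) = h' (s x)" for x
      proof -
        have "h' (s x) = s (h (ginv s (s x)))" using s(2) by auto
        thus ?thesis using s(1) by simp
      qed
      have "z \<circ> h = h \<circ> z"
      proof
        fix x
        have "(z \<circ> h) x = ginv s0 (h' (s x))" by (simp add: z sh)
        also have "\<dots> = h (ginv s0 (s x))" using s0(1) by (simp add: h'x)
        finally show "(z \<circ> h) x = (h \<circ> z) x" by (simp add: z)
      qed
      moreover have "z \<in> Sym n" using s(1) s0(1) by (simp add: z)
      ultimately show "z \<in> {t\<in>Sym n. t \<circ> h = h \<circ> t}" by simp
    qed
    show "finite {t\<in>Sym n. t \<circ> h = h \<circ> t}" by simp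
  qed
qed

lemma supp_conj:
  assumes s: "s \<in> Sym n"
  shows "supp (s \<circ> h \<circ> ginv s) = supp h"
proof -
  have "{x. (s \<circ> h \<circ> ginv s) x \<noteq> x} = s ` {y. h y \<noteq> y}"
  proof (rule equalityI; rule subsetI)
    fix x assume "x \<in> {x. (s \<circ> h \<circ> ginv s) x \<noteq> x}"
    hence "s (h (ginv s x)) \<noteq> s (ginv s x)" using s by simp
    hence "h (ginv s x) \<noteq> ginv s x" by auto
    moreover have "x = s (ginv s x)" using s by simp
    ultimately show "x \<in> s ` {y. h y \<noteq> y}" by blast
  next
    fix x assume "x \<in> s ` {y. h y \<noteq> y}"
    then obtain y where y: "h y \<noteq> y" "x = s y" by auto
    hence "s (h y) \<noteq> s y" using Sym_inj[OF s] by (auto dest: injD)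
    thus "x \<in> {x. (s \<circ> h \<circ> ginv s) x \<noteq> x}" using y s by simp
  qed
  thus ?thesis unfolding supp_def using card_image[OF inj_on_subset[OF Sym_inj[OF s]]] by auto
qed

lemma Pf_bound:
  assumes H: "H \<subseteq> Sym n" and h: "h \<in> Sym n"
  shows "Pf n (H - {id}) h \<le> real (card {h'\<in>H. supp h' = supp h}) * (fact (n - supp h) * supp h ^ (supp h div 2)) / fact n"
proof -
  define I where "I = {h'\<in>H. supp h' = supp h}"
  define B where "B = fact (n - supp h) * supp h ^ (supp h div 2)"
  have finI: "finite I" using H finite_subset by (auto simp: I_def intro: finite_subset[OF _ Sym_finite])
  have sub: "{s\<in>Sym n. s \<circ> h \<circ> ginv s \<in> H - {id}} \<subseteq> (\<Union>h'\<in>I. {s\<in>Sym n. s \<circ> h \<circ> ginv s = h'})"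
    using supp_conj by (fastforce simp: I_def)
  have "card {s\<in>Sym n. s \<circ> h \<circ> ginv s \<in> H - {id}} \<le> card (\<Union>h'\<in>I. {s\<in>Sym n. s \<circ> h \<circ> ginv s = h'})"
    by (rule card_mono[OF _ sub]) (use finI in auto)
  also have "\<dots> \<le> (\<Sum>h'\<in>I. card {s\<in>Sym n. s \<circ> h \<circ> ginv s = h'})" by (rule card_UN_le[OF finI])
  also have "\<dots> \<le> (\<Sum>h'\<in>I. B)"
    by (intro sum_mono order.trans[OF conj_count[OF h]]) (simp add: B_def centralizer_bound[OF h])
  also have "\<dots> = card I * B" by simp
  finally have "real (card {s\<in>Sym n. s \<circ> h \<circ> ginv s \<in> H - {id}}) \<le> real (card I * B)" by linarith
  thus ?thesis by (simp add: Pf_def I_def B_def divide_right_mono)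
qed



lemma fact_split: "k \<le> n \<Longrightarrow> (fact n :: real) = fact (n - k) * (\<Prod>i<k. real (n - i))"
proof (induction k)
  case 0 thus ?case by simp
next
  case (Suc k)
  have IH: "(fact n :: real) = fact (n - k) * (\<Prod>i<k. real (n - i))" using Suc by simp
  have nk: "n - k = Suc (n - Suc k)" using Suc.prems by simp
  have "(fact (n - k) :: real) = fact (Suc (n - Suc k))" by (simp only: nk)
  also have "\<dots> = real (Suc (n - Suc k)) * fact (n - Suc k)" by (rule fact_Suc)
  also have "Suc (n - Suc k) = n - k" using nk by simp
  finally have "(fact (n - k) :: real) = real (n - k) * fact (n - Suc k)" .
  thus ?case using IH by (simp add: mult_ac)
qed

lemma kk_fact: "real k ^ k / fact k \<le> exp (real k)"
proof -
  let ?f = "\<lambda>n. real k ^ n /\<^sub>R fact n"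
  have s: "?f sums exp (real k)" by (rule exp_converges)
  have "sum ?f {k} \<le> suminf ?f"
    by (rule sum_le_suminf[OF sums_summable[OF s]]) auto
  thus ?thesis using sums_unique[OF s] by (simp add: divide_inverse mult.commute)
qed

lemma falling_lower:
  assumes "k \<le> n" "0 < k"
  shows "real n ^ k * fact k / real k ^ k \<le> (\<Prod>i<k. real (n - i))"
proof -
  have "(\<Prod>i<k. (real n / real k) * real (k - i)) \<le> (\<Prod>i<k. real (n - i))"
  proof (rule prod_mono, rule conjI)
    fix i assume "i \<in> {..<k}"
    hence i: "i < k" by simp
    show "0 \<le> real n / real k * real (k - i)" by simp
    have "real n * real (k - i) \<le> real k * real (n - i)"
    proof -
      have "real i * real k \<le> real i * real n" using assms by (simp add: mult_left_mono)
      thus ?thesis using i assms by (simp add: of_nat_diff algebra_simps)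
    qed
    thus "real n / real k * real (k - i) \<le> real (n - i)"
      using assms by (simp add: field_simps)
  qed
  moreover have "(\<Prod>i<k. (real n / real k) * real (k - i)) = (real n / real k) ^ k * fact k"
  proof -
    have "(\<Prod>i<k. real (k - i)) = fact k"
      by (simp add: fact_prod_rev[of k] atLeast0LessThan)
    thus ?thesis by (simp only: prod.distrib prod_constant card_lessThan)
  qed
  ultimately show ?thesis by (simp add: power_divide)
qed

lemma U_bound:
  assumes k: "1 \<le> k" "k \<le> n"
  shows "real n powr (2 * real k / 7) * fact (n - k) * real (k ^ (k div 2)) / fact n \<le> (exp 1 * real n powr (-3/14)) ^ k"
proof -
  define P where "P = (\<Prod>i<k. real (n - i))"
  have n0: "real n > 0" using k by simp
  have fn: "(fact n :: real) = fact (n - k) * P" unfolding P_def by (rule fact_split[OF k(2)])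
  have low: "real n ^ k * fact k / real k ^ k \<le> P" unfolding P_def by (rule falling_lower) (use k in auto)
  have Ppos: "P > 0" unfolding P_def by (rule prod_pos) (use k in auto)
  have fpos: "(fact (n - k) :: real) > 0" by simp
  have "fact (n - k) / (fact n :: real) = fact (n - k) / (fact (n - k) * P)" using fn by simp
  also have "\<dots> = 1 / P" using fpos Ppos by simp
  also have "\<dots> \<le> 1 / (real n ^ k * fact k / real k ^ k)"
    using low k n0 Ppos by (intro divide_left_mono) (auto intro!: divide_pos_pos mult_pos_pos)
  also have "\<dots> = (real k ^ k / fact k) / real n ^ k" by simp
  also have "\<dots> \<le> exp (real k) / real n ^ k"
    using kk_fact[of k] n0 by (intro divide_right_mono) auto
  finally have A: "fact (n - k) / (fact n :: real) \<le> exp (real k) / real n ^ k" .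
  have B: "real (k ^ (k div 2)) \<le> real n powr (real k / 2)"
  proof -
    have "real (k ^ (k div 2)) \<le> real n ^ (k div 2)" using k by (simp add: power_mono)
    also have "\<dots> = real n powr real (k div 2)" using n0 by (simp add: powr_realpow)
    also have "\<dots> \<le> real n powr (real k / 2)"
      using k by (intro powr_mono) (auto simp: real_of_nat_div)
    finally show ?thesis .
  qed
  have "real n powr (2 * real k / 7) * fact (n - k) * real (k ^ (k div 2)) / fact n
      = real n powr (2 * real k / 7) * real (k ^ (k div 2)) * (fact (n - k) / fact n)" by simp
  also have "\<dots> \<le> real n powr (2 * real k / 7) * real n powr (real k / 2) * (exp (real k) / real n ^ k)"
    by (intro mult_mono A B) auto
  also have "\<dots> = exp (real k) * (real n powr (2 * real k / 7) * real n powr (real k / 2) / real n powr real k)"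
    using n0 by (simp add: powr_realpow)
  also have "real n powr (2 * real k / 7) * real n powr (real k / 2) / real n powr real k = real n powr (2 * real k / 7 + real k / 2 - real k)"
    by (simp only: powr_add[symmetric] powr_diff[symmetric])
  also have "real n powr (2 * real k / 7 + real k / 2 - real k) = real n powr (real k * (-3/14))"
    by (rule arg_cong[where f="\<lambda>e. real n powr e"]) simp
  also have "\<dots> = (real n powr (-3/14)) ^ k" using n0 by (simp add: powr_power)
  also have "exp (real k) = exp 1 ^ k" using exp_of_nat_mult[of k 1] by simp
  also have "exp 1 ^ k * (real n powr (-3/14)) ^ k = (exp 1 * real n powr (-3/14)) ^ k"
    by (simp add: power_mult_distrib)
  finally show ?thesis .
qed



lemma geom_bound:
  fixes q :: real
  assumes "0 \<le> q" "q \<le> 1/2"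
  shows "(\<Sum>k\<in>{a..n}. q ^ k) \<le> 2 * q ^ a"
proof (cases "n < a")
  case True thus ?thesis using assms by simp
next
  case False
  have q1: "q \<noteq> 1" using assms by auto
  have "(\<Sum>k\<in>{a..n}. q ^ k) = (q ^ a - q ^ Suc n) / (1 - q)"
    using False q1 by (simp add: sum_gp)
  also have "\<dots> \<le> q ^ a / (1 - q)"
    using assms by (intro divide_right_mono) auto
  also have "\<dots> \<le> q ^ a / (1/2)"
    using assms by (intro divide_left_mono) auto
  finally show ?thesis by simp
qed

lemma S_bound:
  assumes H: "H \<subseteq> Sym n" and n: "n \<ge> 1"
    and cnt: "\<forall>k\<le>n. real (card {h\<in>H. supp h = k}) \<le> real n powr (real k / 7)"
    and md: "\<forall>h\<in>H - {id}. supp h > K"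
    and q: "q = exp 1 * real n powr (-3/14)" "q \<le> 1/2"
  shows "(\<Sum>h\<in>H - {id}. Pf n (H - {id}) h) \<le> 2 * q ^ (K + 1)"
proof -
  define H' where "H' = H - {id}"
  define T where "T = (\<lambda>k::nat. real n powr (real k / 7) * (fact (n - k) * real (k ^ (k div 2))) / fact n)"
  have finH': "finite H'" using H by (auto simp: H'_def intro: finite_subset[OF _ Sym_finite])
  have hS: "h \<in> Sym n" if "h \<in> H'" for h using that H by (auto simp: H'_def)
  have kb: "K < supp h" "supp h \<le> n" if "h \<in> H'" for h
    using md that supp_le[OF hS[OF that]] by (auto simp: H'_def)
  have T0: "T k \<ge> 0" for k by (simp add: T_def)
  have step1: "Pf n H' h \<le> T (supp h)" if h: "h \<in> H'" for h
  proof -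
    have "Pf n H' h \<le> real (card {h'\<in>H. supp h' = supp h}) * (fact (n - supp h) * supp h ^ (supp h div 2)) / fact n"
      unfolding H'_def by (rule Pf_bound[OF H hS[OF h]])
    also have "\<dots> \<le> real n powr (real (supp h) / 7) * (fact (n - supp h) * real (supp h ^ (supp h div 2))) / fact n"
    proof -
      have c: "real (card {h'\<in>H. supp h' = supp h}) \<le> real n powr (real (supp h) / 7)"
        using cnt kb(2)[OF h] by blast
      have "real (card {h'\<in>H. supp h' = supp h}) * (fact (n - supp h) * real (supp h ^ (supp h div 2)))
          \<le> real n powr (real (supp h) / 7) * (fact (n - supp h) * real (supp h ^ (supp h div 2)))"
        by (rule mult_right_mono[OF c]) simp
      thus ?thesis by (intro divide_right_mono) auto
    qed
    finally show ?thesis by (simp add: T_def)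
  qed
  have "(\<Sum>h\<in>H'. Pf n H' h) \<le> (\<Sum>h\<in>H'. T (supp h))" by (rule sum_mono[OF step1])
  also have "\<dots> = (\<Sum>k\<in>supp ` H'. \<Sum>h\<in>{x. x \<in> H' \<and> supp x = k}. T (supp h))"
    by (rule sum.image_gen[OF finH'])
  also have "\<dots> = (\<Sum>k\<in>supp ` H'. real (card {x. x \<in> H' \<and> supp x = k}) * T k)"
    by (intro sum.cong refl) simp
  also have "\<dots> \<le> (\<Sum>k\<in>supp ` H'. real n powr (real k / 7) * T k)"
  proof (rule sum_mono)
    fix k assume k: "k \<in> supp ` H'"
    then obtain h where h: "h \<in> H'" "k = supp h" by auto
    have "card {x. x \<in> H' \<and> supp x = k} \<le> card {h\<in>H. supp h = k}"
      by (rule card_mono) (use H in \<open>auto simp: H'_def intro: finite_subset[OF _ Sym_finite]\<close>)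
    hence "real (card {x. x \<in> H' \<and> supp x = k}) \<le> real n powr (real k / 7)"
      using cnt kb(2)[OF h(1)] h(2) by (meson of_nat_le_iff order_trans)
    thus "real (card {x. x \<in> H' \<and> supp x = k}) * T k \<le> real n powr (real k / 7) * T k"
      by (rule mult_right_mono) (rule T0)
  qed
  also have "\<dots> \<le> (\<Sum>k\<in>{K+1..n}. real n powr (real k / 7) * T k)"
  proof (rule sum_mono2)
    show "supp ` H' \<subseteq> {K+1..n}"
    proof
      fix k assume "k \<in> supp ` H'"
      then obtain h where "h \<in> H'" "k = supp h" by auto
      thus "k \<in> {K+1..n}" using kb[of h] by auto
    qed
  qed (auto intro: mult_nonneg_nonneg T0)
  also have "\<dots> \<le> (\<Sum>k\<in>{K+1..n}. q ^ k)"
  proof (rule sum_mono)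
    fix k assume k: "k \<in> {K+1..n}"
    have "real n powr (real k / 7) * T k = real n powr (2 * real k / 7) * fact (n - k) * real (k ^ (k div 2)) / fact n"
    proof -
      have "real n powr (real k / 7) * real n powr (real k / 7) = real n powr (2 * real k / 7)"
        by (simp add: powr_add[symmetric])
      thus ?thesis by (simp add: T_def mult_ac)
    qed
    also have "\<dots> \<le> (exp 1 * real n powr (-3/14)) ^ k" by (rule U_bound) (use k in auto)
    finally show "real n powr (real k / 7) * T k \<le> q ^ k" using q by simp
  qed
  also have "\<dots> \<le> 2 * q ^ (K + 1)"
    by (rule geom_bound) (use q in auto)
  finally show ?thesis by (simp add: H'_def)
qed



theorem proposition1:
  fixes I :: "nat set" and H :: "nat \<Rightarrow> (nat \<Rightarrow> nat) set"
  assumes "infinite I" and "\<forall>n\<in>I. n > 0"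
    and "\<forall>n\<in>I. is_subgroup_Sym n (H n)"
    and "\<forall>K::nat. infinite {n\<in>I. min_degree (H n) > enat K}"
    and "\<forall>n\<in>I. \<forall>k\<le>n. real (card {h\<in>H n. supp h = k}) \<le> real n powr (real k / 7)"
  shows "indistinguishable I H"
proof -
  have Hsub: "H n \<subseteq> Sym n" if "n \<in> I" for n using assms(3) that by (auto simp: is_subgroup_Sym_def)
  show ?thesis
    unfolding indistinguishable_def distinguishable_def
  proof
    assume "\<exists>c>0. \<exists>N. \<forall>n\<in>I. N \<le> n \<longrightarrow> ln (real (card (Sym n))) powr - c \<le> D_H n (H n)"
    then obtain c N0 where c: "c > 0"
      and dist: "\<forall>n\<in>I. N0 \<le> n \<longrightarrow> ln (real (card (Sym n))) powr - c \<le> D_H n (H n)" by blast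
    define K where "K = nat \<lceil>(56 * c + 14) / 3\<rceil>"
    have K: "real K \<ge> (56 * c + 14) / 3" unfolding K_def by linarith
    define e where "e = exp (1::real)"
    have e1: "e \<ge> 1" by (simp add: e_def)
    define L where "L = nat \<lceil>(2 * e) ^ 5\<rceil> + nat \<lceil>2 * e ^ (K + 1)\<rceil> + 3"
    have "infinite {n\<in>I. min_degree (H n) > enat K}" using assms(4) by blast
    then obtain n where n: "n \<ge> max N0 L" "n \<in> {n\<in>I. min_degree (H n) > enat K}"
      unfolding infinite_nat_iff_unbounded_le by blast
    hence nI: "n \<in> I" and nN0: "n \<ge> N0" and nL: "n \<ge> L" and md: "min_degree (H n) > enat K" by auto
    have n3: "n \<ge> 3" using nL by (simp add: L_def)
    have npos: "real n > 0" using n3 by simp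
    have nL1: "real n \<ge> (2 * e) ^ 5"
    proof -
      have "(2 * e) ^ 5 \<le> real (nat \<lceil>(2 * e) ^ 5\<rceil>)" by linarith
      also have "\<dots> \<le> real L" unfolding L_def by (simp only: of_nat_add; linarith)
      also have "\<dots> \<le> real n" using nL by simp
      finally show ?thesis .
    qed
    have nL2: "real n > 2 * e ^ (K + 1)"
    proof -
      have "2 * e ^ (K + 1) \<le> real (nat \<lceil>2 * e ^ (K + 1)\<rceil>)" by linarith
      also have "\<dots> < real L" unfolding L_def by (simp only: of_nat_add; linarith)
      also have "\<dots> \<le> real n" using nL by simp
      finally show ?thesis .
    qed
    have supK: "\<forall>h\<in>H n - {id}. supp h > K"
    proof
      fix h assume h: "h \<in> H n - {id}"
      have "min_degree (H n) \<le> enat (supp h)" unfolding min_degree_def by (rule INF_lower[OF h])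
      with md have "enat K < enat (supp h)" by (rule less_le_trans)
      thus "supp h > K" by simp
    qed
    define q where "q = exp 1 * real n powr (-3/14)"
    have q0: "q \<ge> 0" by (simp add: q_def)
    have big: "real n powr (3/14) \<ge> 2 * e"
    proof -
      have "((2 * e) ^ 5) powr (3/14) \<le> real n powr (3/14)" using nL1 e1 by (intro powr_mono2) auto
      moreover have "((2 * e) ^ 5) powr (3/14) = (2 * e) powr (15/14)"
      proof -
        have "(2 * e) ^ 5 = (2 * e) powr (real 5)" using e1 by (subst powr_realpow) auto
        hence "((2 * e) ^ 5) powr (3/14) = ((2 * e) powr (real 5)) powr (3/14)" by simp
        also have "\<dots> = (2 * e) powr (real 5 * (3/14))" by (rule powr_powr)
        also have "\<dots> = (2 * e) powr (15/14)" by (rule arg_cong[where f="\<lambda>x. (2 * e) powr x"]) simp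
        finally show ?thesis .
      qed
      moreover have "(2 * e) powr (15/14) \<ge> (2 * e) powr 1" using e1 by (intro powr_mono) auto
      moreover have "(2 * e) powr 1 = 2 * e" using e1 by simp
      ultimately show ?thesis by linarith
    qed
    have q_le: "q \<le> 1/2"
    proof -
      have p0: "real n powr (3/14) > 0" using npos by simp
      have inv: "real n powr (-3/14) = inverse (real n powr (3/14))"
        using powr_minus[of "real n" "3/14"] by simp
      have "q = e * inverse (real n powr (3/14))" by (simp only: q_def e_def inv)
      also have "\<dots> = e / real n powr (3/14)" by (rule divide_inverse[symmetric])
      also have "\<dots> \<le> e / (2 * e)"
        by (rule divide_left_mono[OF big]) (use e1 p0 in simp_all)
      also have "\<dots> = 1/2" using e1 by simp
      finally show ?thesis .
    qed
    have S: "(\<Sum>h\<in>H n - {id}. Pf n (H n - {id}) h) \<le> 2 * q ^ (K + 1)"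
      by (rule S_bound[OF Hsub[OF nI] _ _ supK q_def q_le]) (use n3 assms(5) nI in auto)
    have Dle: "D_H n (H n) \<le> sqrt (\<Sum>h\<in>H n - {id}. Pf n (H n - {id}) h)"
      by (rule D_H_bound[OF Hsub[OF nI]])
    have qK: "2 * q ^ (K + 1) < real n powr (-4 * c)"
    proof -
      have "q ^ (K + 1) = e ^ (K + 1) * (real n powr (-3/14)) ^ (K + 1)"
        by (simp add: q_def e_def power_mult_distrib)
      also have "(real n powr (-3/14)) ^ (K + 1) = real n powr (real (K + 1) * (-3/14))"
        by (rule powr_power) (use npos in simp)
      also have "\<dots> \<le> real n powr (-4 * c - 1)"
      proof (rule powr_mono)
        have "real (K + 1) * (-3/14) = -(3/14) * real K - 3/14" by (simp add: algebra_simps)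
        moreover have "-(3/14) * real K \<le> -(3/14) * ((56 * c + 14) / 3)" using K by simp
        ultimately show "real (K + 1) * (-3/14) \<le> -4 * c - 1" by (simp add: algebra_simps)
        show "1 \<le> real n" using n3 by simp
      qed
      also have "real n powr (-4 * c - 1) = real n powr (-4 * c) / real n"
        using npos by (simp add: powr_diff)
      finally have "q ^ (K + 1) \<le> e ^ (K + 1) * (real n powr (-4 * c) / real n)"
        using e1 by (simp add: mult_left_mono)
      hence "2 * q ^ (K + 1) \<le> (2 * e ^ (K + 1) / real n) * real n powr (-4 * c)" by simp
      also have "\<dots> < 1 * real n powr (-4 * c)"
        using nL2 npos by (intro mult_strict_right_mono) auto
      finally show ?thesis by simp
    qed
    have "sqrt (\<Sum>h\<in>H n - {id}. Pf n (H n - {id}) h) \<le> sqrt (2 * q ^ (K + 1))"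
      by (rule real_sqrt_le_mono[OF S])
    hence "D_H n (H n) \<le> sqrt (2 * q ^ (K + 1))" using Dle by linarith
    also have "\<dots> < sqrt (real n powr (-4 * c))" using qK by (rule real_sqrt_less_mono)
    also have "\<dots> = real n powr (-2 * c)"
      using powr_half_sqrt_powr[of "real n" "-4 * c"] npos by simp
    also have "\<dots> \<le> ln (real (card (Sym n))) powr - c"
    proof -
      have cs: "real (card (Sym n)) = fact n" by (simp add: Sym_card)
      have f1: "(fact n :: real) > 1"
      proof -
        have a: "n \<le> fact n" by (rule fact_ge_self)
        have "real n \<le> real (fact n)" using a by (rule of_nat_mono)
        moreover have "real (fact n) = (fact n :: real)" by (rule of_nat_fact)
        ultimately have "(fact n :: real) \<ge> real n" by simp
        thus ?thesis using n3 by simp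
      qed
      have lnpos: "ln (fact n :: real) > 0" using f1 by simp
      have fle: "(fact n :: real) \<le> real n ^ n" using fact_le_power[where 'a=real, of n] by simp
      have "ln (fact n :: real) \<le> ln (real n ^ n)"
        using ln_le_cancel_iff[of "fact n" "real n ^ n"] fle f1 npos by simp
      also have "\<dots> = real n * ln (real n)" by (simp add: ln_realpow)
      also have "\<dots> \<le> real n * real n" using npos by (intro mult_left_mono) (auto intro: less_imp_le)
      finally have lnle: "ln (fact n :: real) \<le> real n * real n" .
      have "(real n * real n) powr - c \<le> ln (fact n :: real) powr - c"
        using c lnpos lnle by (intro powr_mono2') auto
      moreover have "(real n * real n) powr - c = real n powr (-2 * c)"
      proof -
        have "(real n * real n) powr - c = real n powr - c * real n powr - c" by (rule powr_mult)
        also have "\<dots> = real n powr (- c + - c)" by (rule powr_add[symmetric])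
        also have "real n powr (- c + - c) = real n powr (-2 * c)" by (rule arg_cong[where f="\<lambda>x. real n powr x"]) simp
        finally show ?thesis .
      qed
      ultimately show ?thesis by (simp add: cs)
    qed
    also have "\<dots> \<le> D_H n (H n)" using dist nI nN0 by blast
    finally show False by simp
  qed
qed


end
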